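(* Let $\lambda=(\lambda_1,\ldots,\lambda_\ell)$ be a partition with $\ell$ positive parts, and let $\mu=(\lambda_a,\lambda_{a+1},\ldots,\lambda_b)$ for some $1\leq a\leq b\leq\ell$ (a consecutive subpartition), having $m=b-a+1$ parts. Suppose $n\geq\ell$. Then the poset $\mathcal B_\mu^{n-\ell+m}$ is isomorphic to an interval in the poset $\mathcal B_\lambda^n$. In particular, if $\mathcal B_\mu^{n-\ell+m}$ is not a lattice, then $\mathcal B_\lambda^n$ is not a lattice.
   Context: For $N\geq 1$ and a partition $\nu$ with at most $N$ positive parts, $\mathcal B_\nu^N$ is the set of semistandard Young tableaux of shape $\nu$ (rows weakly increasing, columns strictly increasing) with entries in $\{1,\ldots,N+1\}$, partially ordered by the reflexive transitive closure of $T<F_i(T)$ for $i\in\{1,\ldots,N\}$ with $F_i(T)\neq 0$. Here $F_i$ is the type A crystal lowering operator: in the reading word of $T$ (rows read from bottom to top, each row left to right) keep only letters $i$ and $i+1$, replace each $i$ by ")" and each $i+1$ by "(", and match parentheses in the usual way; if there is no unmatched ")", $F_i(T)=0$; otherwise $F_i(T)$ is obtained by changing the entry $i$ corresponding to the rightmost unmatched ")" into $i+1$. *)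

theory Defs
  imports Main
begin

definition is_partition :: "nat list \<Rightarrow> bool" where
  "is_partition \<nu> \<longleftrightarrow> sorted (rev \<nu>) \<and> (\<forall>x\<in>set \<nu>. 0 < x)"

text \<open>Tableaux are lists of rows (top row first), each row a list of entries.
  Semistandard tableaux of shape nu with entries in 1..N+1.\<close>
definition is_ssyt :: "nat \<Rightarrow> nat list \<Rightarrow> nat list list \<Rightarrow> bool" where
  "is_ssyt N \<nu> T \<longleftrightarrow>
     length T = length \<nu> \<and>
     (\<forall>i<length \<nu>. length (T ! i) = \<nu> ! i) \<and>
     (\<forall>r\<in>set T. \<forall>x\<in>set r. 1 \<le> x \<and> x \<le> N + 1) \<and>
     (\<forall>r\<in>set T. sorted r) \<and>
     (\<forall>i j. Suc i < length T \<and> j < length (T ! Suc i) \<longrightarrow> T ! i ! j < T ! Suc i ! j)"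

definition Btab :: "nat \<Rightarrow> nat list \<Rightarrow> nat list list set" where
  "Btab N \<nu> = {T. is_ssyt N \<nu> T}"

definition reading_word :: "nat list list \<Rightarrow> nat list" where
  "reading_word T = concat (rev T)"

fun split_by :: "nat list \<Rightarrow> 'a list \<Rightarrow> 'a list list" where
  "split_by [] w = []"
| "split_by (l # ls) w = take l w # split_by ls (drop l w)"

text \<open>Bracket matching: letter i is ")" and letter i+1 is "(".  Scanning left to right
  with d = number of currently unmatched "(" and p = current position, returns the
  positions (increasing) of the unmatched ")".\<close>
fun unmatched_closes :: "nat \<Rightarrow> nat \<Rightarrow> nat \<Rightarrow> nat list \<Rightarrow> nat list" where
  "unmatched_closes i d p [] = []"
| "unmatched_closes i d p (x # xs) =
     (if x = Suc i then unmatched_closes i (Suc d) (Suc p) xs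
      else if x = i then
        (if 0 < d then unmatched_closes i (d - 1) (Suc p) xs
         else p # unmatched_closes i d (Suc p) xs)
      else unmatched_closes i d (Suc p) xs)"

text \<open>Crystal lowering operator F_i; None represents 0.\<close>
definition Fop :: "nat \<Rightarrow> nat list list \<Rightarrow> nat list list option" where
  "Fop i T =
    (let w = reading_word T; u = unmatched_closes i 0 0 w in
     if u = [] then None
     else Some (rev (split_by (rev (map length T)) (w[last u := Suc i]))))"

definition Bstep :: "nat \<Rightarrow> nat list \<Rightarrow> nat list list \<Rightarrow> nat list list \<Rightarrow> bool" where
  "Bstep N \<nu> S T \<longleftrightarrow> S \<in> Btab N \<nu> \<and> T \<in> Btab N \<nu> \<and>
     (\<exists>i. 1 \<le> i \<and> i \<le> N \<and> Fop i S = Some T)"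

definition Ble :: "nat \<Rightarrow> nat list \<Rightarrow> nat list list \<Rightarrow> nat list list \<Rightarrow> bool" where
  "Ble N \<nu> = (Bstep N \<nu>)\<^sup>*\<^sup>*"

definition interval :: "'a set \<Rightarrow> ('a \<Rightarrow> 'a \<Rightarrow> bool) \<Rightarrow> 'a \<Rightarrow> 'a \<Rightarrow> 'a set" where
  "interval A le x y = {z \<in> A. le x z \<and> le z y}"

definition poset_iso :: "'a set \<Rightarrow> ('a \<Rightarrow> 'a \<Rightarrow> bool) \<Rightarrow> 'b set \<Rightarrow> ('b \<Rightarrow> 'b \<Rightarrow> bool) \<Rightarrow> bool" where
  "poset_iso A leA C leC \<longleftrightarrow>
     (\<exists>f. bij_betw f A C \<and> (\<forall>x\<in>A. \<forall>y\<in>A. leA x y \<longleftrightarrow> leC (f x) (f y)))"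

definition is_lattice :: "'a set \<Rightarrow> ('a \<Rightarrow> 'a \<Rightarrow> bool) \<Rightarrow> bool" where
  "is_lattice A le \<longleftrightarrow>
     (\<forall>x\<in>A. \<forall>y\<in>A.
        (\<exists>j\<in>A. le x j \<and> le y j \<and> (\<forall>z\<in>A. le x z \<and> le y z \<longrightarrow> le j z)) \<and>
        (\<exists>m\<in>A. le m x \<and> le m y \<and> (\<forall>z\<in>A. le z x \<and> le z y \<longrightarrow> le z m)))"

end

theory Submission
  imports Defs
begin

fun df :: "nat \<Rightarrow> nat \<Rightarrow> nat list \<Rightarrow> nat" where
  "df i d [] = d"
| "df i d (x # xs) = df i (if x = Suc i then Suc d else if x = i then d - 1 else d) xs"

abbreviation uc where "uc \<equiv> unmatched_closes"

lemma uc_append: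
  "uc i d p (xs @ ys) = uc i d p xs @ uc i (df i d xs) (p + length xs) ys"
  by (induction xs arbitrary: d p) auto

lemma df_append: "df i d (xs @ ys) = df i (df i d xs) ys"
  by (induction xs arbitrary: d) auto

lemma uc_shift: "uc i d (p + q) w = map (\<lambda>e. e + q) (uc i d p w)"
proof (induction w arbitrary: d p)
  case (Cons x w)
  show ?case using Cons.IH[of _ "Suc p"] by simp
qed simp

lemma uc_mem: "e \<in> set (uc i d p w) \<Longrightarrow> p \<le> e \<and> e < p + length w \<and> w ! (e - p) = i"
proof (induction w arbitrary: d p)
  case Nil then show ?case by simp
next
  case (Cons x xs)
  have h: "Suc p \<le> e \<and> e < Suc p + length xs \<and> xs ! (e - Suc p) = i"
    if "e \<in> set (uc i d' (Suc p) xs)" for d' using Cons.IH that by blast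
  have e: "(x # xs) ! (e - p) = xs ! (e - Suc p)" if "Suc p \<le> e"
    using that by (simp add: Suc_diff_Suc[symmetric])
  from Cons.prems show ?case
    by (auto split: if_splits dest!: h simp: e)
qed

lemma uc_map_add: "uc (i + c) d p (map (\<lambda>x. x + c) w) = uc i d p w"
  by (induction w arbitrary: d p) auto

lemma df_map_add: "df (i + c) d (map (\<lambda>x. x + c) w) = df i d w"
  by (induction w arbitrary: d) auto

lemma uc_nob: "\<forall>x\<in>set w. x \<noteq> i \<and> x \<noteq> Suc i \<Longrightarrow> uc i d p w = [] \<and> df i d w = d"
  by (induction w arbitrary: d p) auto

definition lcnt :: "nat \<Rightarrow> nat list \<Rightarrow> nat" where
  "lcnt c xs = length (filter (\<lambda>x. x < c) xs)"
definition acnt :: "nat \<Rightarrow> nat list \<Rightarrow> nat" where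
  "acnt c xs = length (filter (\<lambda>x. x = c) xs)"

lemma uc_sorted:
  "sorted xs \<Longrightarrow> uc i d p xs = [p + lcnt i xs + d ..< p + lcnt i xs + acnt i xs]"
proof (induction xs arbitrary: d p)
  case Nil then show ?case by (simp add: lcnt_def acnt_def)
next
  case (Cons x xs)
  have s: "sorted xs" and ge: "\<forall>y\<in>set xs. x \<le> y" using Cons.prems by auto
  show ?case
  proof (cases "x < i")
    case True
    then show ?thesis using Cons.IH[OF s, of d "Suc p"] by (simp add: lcnt_def acnt_def)
  next
    case False
    then have l0: "lcnt i xs = 0" using ge unfolding lcnt_def by (auto simp: filter_empty_conv)
    show ?thesis
    proof (cases "x = i")
      case True
      show ?thesis
      proof (cases "d = 0")
        case True
        then show ?thesis using Cons.IH[OF s, of 0 "Suc p"] \<open>x = i\<close> l0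
          by (simp add: lcnt_def acnt_def upt_conv_Cons del: upt_Suc)
      next
        case False
        then show ?thesis using Cons.IH[OF s, of "d - 1" "Suc p"] \<open>x = i\<close> l0
          by (simp add: lcnt_def acnt_def)
      qed
    next
      case False
      then have a0: "acnt i xs = 0" using ge \<open>\<not> x < i\<close> unfolding acnt_def
        by (auto simp: filter_empty_conv)
      show ?thesis using Cons.IH[OF s, of "Suc d" "Suc p"] Cons.IH[OF s, of d "Suc p"] False \<open>\<not> x < i\<close> l0 a0
        by (simp add: lcnt_def acnt_def)
    qed
  qed
qed

lemma df_sorted:
  "sorted xs \<Longrightarrow> df i d xs = (d - acnt i xs) + acnt (Suc i) xs"
proof (induction xs arbitrary: d)
  case Nil then show ?case by (simp add: acnt_def)
next
  case (Cons x xs)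
  have s: "sorted xs" and ge: "\<forall>y\<in>set xs. x \<le> y" using Cons.prems by auto
  show ?case
  proof (cases "x < i")
    case True
    then show ?thesis using Cons.IH[OF s, of d] by (simp add: acnt_def)
  next
    case False
    show ?thesis
    proof (cases "x = i")
      case True
      then show ?thesis using Cons.IH[OF s, of "d - 1"] by (simp add: acnt_def)
    next
      case False
      then have a0: "acnt i xs = 0" using ge \<open>\<not> x < i\<close> unfolding acnt_def
        by (auto simp: filter_empty_conv)
      show ?thesis
      proof (cases "x = Suc i")
        case True
        then show ?thesis using Cons.IH[OF s, of "Suc d"] a0 by (simp add: acnt_def)
      next
        case False
        then have b0: "acnt (Suc i) xs = 0" using ge \<open>\<not> x < i\<close> \<open>x \<noteq> i\<close> unfolding acnt_def
          by (auto simp: filter_empty_conv)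
        show ?thesis using Cons.IH[OF s, of d] a0 b0 False \<open>x \<noteq> i\<close> by (simp add: acnt_def)
      qed
    qed
  qed
qed

lemma sorted_thr:
  "sorted xs \<Longrightarrow> k < length xs \<Longrightarrow> (xs ! k < c \<longleftrightarrow> k < lcnt c xs)"
proof (induction xs arbitrary: k)
  case Nil then show ?case by simp
next
  case (Cons x xs)
  have s: "sorted xs" and ge: "\<forall>y\<in>set xs. x \<le> y" using Cons.prems by auto
  show ?case
  proof (cases "x < c")
    case True
    then show ?thesis using Cons.IH[OF s] Cons.prems by (cases k) (auto simp: lcnt_def)
  next
    case False
    then have "lcnt c (x # xs) = 0" using ge unfolding lcnt_def by (auto simp: filter_empty_conv)
    moreover have "\<not> (x # xs) ! k < c" using False ge Cons.prems
      by (cases k) (auto, meson le_trans not_less nth_mem)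
    ultimately show ?thesis by simp
  qed
qed

lemma lcnt_Suc: "lcnt (Suc i) xs = lcnt i xs + acnt i xs"
  by (induction xs) (auto simp: lcnt_def acnt_def)

lemma lcnt_acnt_le: "lcnt i xs + acnt i xs \<le> length xs"
  by (metis lcnt_Suc lcnt_def length_filter_le)

definition D :: "nat \<Rightarrow> nat list list \<Rightarrow> nat \<Rightarrow> nat" where
  "D i T t = df i 0 (concat (rev (drop t T)))"

lemma D_step: "t < length T \<Longrightarrow> D i T t = df i (D i T (Suc t)) (T ! t)"
  unfolding D_def by (simp add: Cons_nth_drop_Suc[symmetric] df_append)

lemma D_len: "D i T (length T) = 0"
  unfolding D_def by simp

lemma D_ge: "length T \<le> t \<Longrightarrow> D i T t = 0"
  unfolding D_def by simp

lemma UCtop: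
  assumes "\<forall>r\<in>set T. sorted r"
  shows "s \<le> length T \<Longrightarrow> (\<forall>t<s. acnt i (T!t) \<le> D i T (Suc t)) \<Longrightarrow>
     uc i (D i T s) p (concat (rev (take s T))) = []"
proof (induction s arbitrary: p)
  case 0 then show ?case by simp
next
  case (Suc s)
  have srt: "sorted (T ! s)" using assms Suc.prems by auto
  have "concat (rev (take (Suc s) T)) = T ! s @ concat (rev (take s T))"
    using Suc.prems by (simp add: take_Suc_conv_app_nth)
  moreover have "uc i (D i T (Suc s)) p (T ! s) = []"
    using Suc.prems srt by (simp add: uc_sorted)
  moreover have "df i (D i T (Suc s)) (T ! s) = D i T s"
    using Suc.prems by (simp add: D_step)
  ultimately show ?case using Suc by (simp add: uc_append)
qed

lemma split_by_concat: "split_by (map length xss) (concat xss) = xss"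
  by (induction xss) auto

lemma length_split_by: "length (split_by ls w) = length ls"
  by (induction ls arbitrary: w) auto

lemma concat_split_by: "sum_list ls = length w \<Longrightarrow> concat (split_by ls w) = w"
proof (induction ls arbitrary: w)
  case Nil then show ?case by simp
next
  case (Cons l ls)
  then show ?case by simp
qed

lemma split_by_append_ls:
  "split_by (ls1 @ ls2) w = split_by ls1 w @ split_by ls2 (drop (sum_list ls1) w)"
  by (induction ls1 arbitrary: w) (auto simp: add.commute)

lemma split_by_append_w:
  "sum_list ls \<le> length xs \<Longrightarrow> split_by ls (xs @ ys) = split_by ls xs"
  by (induction ls arbitrary: xs) auto

lemma split_by_map: "split_by ls (map g w) = map (map g) (split_by ls w)"
  by (induction ls arbitrary: w) (auto simp: take_map drop_map)

definition unword :: "nat list list \<Rightarrow> nat list \<Rightarrow> nat list list" where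
  "unword T w = rev (split_by (rev (map length T)) w)"

lemma unword_word: "map length T' = map length T \<Longrightarrow> unword T (reading_word T') = T'"
  unfolding unword_def reading_word_def
  by (metis rev_map rev_rev_ident split_by_concat)

lemma Fop_unword: "Fop i T = (let u = uc i 0 0 (reading_word T) in if u = [] then None
   else Some (unword T ((reading_word T)[last u := Suc i])))"
  unfolding Fop_def unword_def Let_def by simp

lemma word_decomp: "s < length T \<Longrightarrow>
  reading_word T = concat (rev (drop (Suc s) T)) @ T ! s @ concat (rev (take s T))"
proof -
  assume s: "s < length T"
  have "T = take s T @ T ! s # drop (Suc s) T" using s by (simp add: id_take_nth_drop)
  then have "rev T = rev (drop (Suc s) T) @ [T ! s] @ rev (take s T)"
    by (metis append.assoc rev.simps(2) rev_append)
  then show ?thesis unfolding reading_word_def by simp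
qed

lemma FopC_some:
  assumes srt: "\<forall>r\<in>set T. sorted r" and s: "s < length T"
    and ds: "D i T (Suc s) < acnt i (T ! s)"
    and mn: "\<forall>t<s. acnt i (T!t) \<le> D i T (Suc t)"
  shows "Fop i T = Some (T[s := (T!s)[lcnt i (T!s) + acnt i (T!s) - 1 := Suc i]])"
proof -
  define A where "A = concat (rev (drop (Suc s) T))"
  define R where "R = T ! s"
  define C where "C = concat (rev (take s T))"
  define j where "j = lcnt i R + acnt i R - 1"
  have w: "reading_word T = A @ R @ C" unfolding A_def R_def C_def using s by (rule word_decomp)
  have sR: "sorted R" using srt s unfolding R_def by auto
  have dA: "df i 0 A = D i T (Suc s)" unfolding A_def D_def by simp
  have dR: "df i (D i T (Suc s)) R = D i T s" unfolding R_def using s by (simp add: D_step)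
  have uC: "uc i (D i T s) q C = []" for q unfolding C_def using UCtop[OF srt] s mn by simp
  have uR: "uc i (D i T (Suc s)) (length A) R
      = [length A + lcnt i R + D i T (Suc s) ..< length A + lcnt i R + acnt i R]"
    using sR by (simp add: uc_sorted)
  have u: "uc i 0 0 (reading_word T) = uc i 0 0 A @ uc i (D i T (Suc s)) (length A) R"
    unfolding w uc_append using dA dR uC by simp
  have ne: "uc i 0 0 (reading_word T) \<noteq> []" unfolding u uR using ds R_def by simp
  have lst: "last (uc i 0 0 (reading_word T)) = length A + j"
    unfolding u uR j_def using ds R_def by simp
  have jl: "j < length R" unfolding j_def using lcnt_acnt_le[of i R] ds R_def by simp
  define T' where "T' = T[s := R[j := Suc i]]"
  have wT': "reading_word T' = A @ R[j := Suc i] @ C"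
    using word_decomp[of s T'] s unfolding T'_def A_def C_def by simp
  have upd: "(reading_word T)[length A + j := Suc i] = A @ R[j := Suc i] @ C"
    unfolding w using jl by (simp add: list_update_append)
  have ml: "map length T' = map length T"
    unfolding T'_def R_def using s by (metis length_list_update list_update_id map_update nth_map)
  show ?thesis unfolding Fop_unword Let_def using ne lst upd wT' unword_word[OF ml]
    by (simp add: T'_def R_def j_def)
qed

lemma FopC_none:
  assumes srt: "\<forall>r\<in>set T. sorted r"
    and mn: "\<forall>t<length T. acnt i (T!t) \<le> D i T (Suc t)"
  shows "Fop i T = None"
proof -
  have "uc i (D i T (length T)) 0 (concat (rev (take (length T) T))) = []"
    using UCtop[OF srt, of "length T" i 0] mn by simp
  then show ?thesis unfolding Fop_unword Let_def reading_word_def D_len by simp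
qed

lemma FopC_cases:
  assumes srt: "\<forall>r\<in>set T. sorted r" and F: "Fop i T = Some T'"
  obtains s where "s < length T" "D i T (Suc s) < acnt i (T ! s)"
    "\<forall>t<s. acnt i (T!t) \<le> D i T (Suc t)"
    "T' = T[s := (T!s)[lcnt i (T!s) + acnt i (T!s) - 1 := Suc i]]"
proof -
  let ?P = "\<lambda>t. t < length T \<and> D i T (Suc t) < acnt i (T ! t)"
  have ex: "\<exists>t. ?P t"
  proof (rule ccontr)
    assume "\<not> (\<exists>t. ?P t)"
    then have "Fop i T = None" using FopC_none[OF srt] by (meson not_le)
    with F show False by simp
  qed
  define s where "s = (LEAST t. ?P t)"
  have Ps: "?P s" unfolding s_def using ex by (rule LeastI_ex)
  have mn: "\<forall>t<s. acnt i (T!t) \<le> D i T (Suc t)"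
  proof (intro allI impI)
    fix t assume "t < s"
    then have "\<not> ?P t" unfolding s_def using not_less_Least by blast
    then show "acnt i (T!t) \<le> D i T (Suc t)" using \<open>t < s\<close> Ps by auto
  qed
  show ?thesis using that Ps mn FopC_some[OF srt _ _ mn] F by auto
qed

lemma ssyt_sorted: "is_ssyt N \<nu> T \<Longrightarrow> \<forall>r\<in>set T. sorted r"
  unfolding is_ssyt_def by blast

lemma ssyt_entry: "is_ssyt N \<nu> T \<Longrightarrow> t < length T \<Longrightarrow> k < length (T!t) \<Longrightarrow>
   1 \<le> T!t!k \<and> T!t!k \<le> N + 1"
  unfolding is_ssyt_def by (meson nth_mem)

lemma ssyt_col: "is_ssyt N \<nu> T \<Longrightarrow> Suc t < length T \<Longrightarrow> k < length (T!Suc t) \<Longrightarrow>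
   T!t!k < T!Suc t!k"
  unfolding is_ssyt_def by blast

lemma ssyt_len: "is_ssyt N \<nu> T \<Longrightarrow> t < length T \<Longrightarrow> length (T!t) = \<nu>!t"
  unfolding is_ssyt_def by auto

lemma ssyt_length: "is_ssyt N \<nu> T \<Longrightarrow> length T = length \<nu>"
  unfolding is_ssyt_def by auto

lemma ssyt_row_sorted: "is_ssyt N \<nu> T \<Longrightarrow> t < length T \<Longrightarrow> sorted (T!t)"
  unfolding is_ssyt_def by auto

lemma part_mono: "is_partition \<nu> \<Longrightarrow> t \<le> t' \<Longrightarrow> t' < length \<nu> \<Longrightarrow> \<nu>!t' \<le> \<nu>!t"
  unfolding is_partition_def by (simp add: sorted_rev_nth_mono)

lemma ssyt_len_mono: "is_partition \<nu> \<Longrightarrow> is_ssyt N \<nu> T \<Longrightarrow> t \<le> t' \<Longrightarrow> t' < length T \<Longrightarrow>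
   length (T!t') \<le> length (T!t)"
  using part_mono ssyt_len ssyt_length by (metis le_less_trans)

lemma acnt_card: "acnt c xs = card {k. k < length xs \<and> xs!k = c}"
  unfolding acnt_def by (simp add: length_filter_conv_card)

lemma acnt_ge:
  assumes "\<forall>k. m \<le> k \<and> k < m + a \<longrightarrow> k < length xs \<and> xs!k = c"
  shows "a \<le> acnt c xs"
proof -
  have "{m..<m+a} \<subseteq> {k. k < length xs \<and> xs!k = c}" using assms by auto
  then have "card {m..<m+a} \<le> card {k. k < length xs \<and> xs!k = c}"
    by (intro card_mono) auto
  then show ?thesis by (simp add: acnt_card)
qed

lemma sorted_update:
  assumes "sorted xs" "j < length xs" "\<forall>k<j. xs!k \<le> v"
    "\<forall>k. j < k \<and> k < length xs \<longrightarrow> v \<le> xs!k"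
  shows "sorted (xs[j := v])"
  unfolding sorted_iff_nth_mono
proof (intro allI impI)
  fix p q assume pq: "p \<le> q" "q < length (xs[j := v])"
  show "xs[j := v] ! p \<le> xs[j := v] ! q"
    using assms pq sorted_nth_mono[OF assms(1), of p q]
    by (cases "p = j"; cases "q = j") (auto simp: nth_list_update)
qed

lemma row_i_pos:
  assumes "sorted R" "lcnt i R \<le> k" "k < lcnt i R + acnt i R"
  shows "k < length R" "R ! k = i"
proof -
  show kl: "k < length R" using assms lcnt_acnt_le[of i R] by simp
  have "\<not> R!k < i" using sorted_thr[OF assms(1) kl, of i] assms by simp
  moreover have "R!k < Suc i" using sorted_thr[OF assms(1) kl, of "Suc i"] assms lcnt_Suc by simp
  ultimately show "R ! k = i" by simp
qed

lemma F_preserves: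
  assumes T: "is_ssyt N \<nu> T" and iN: "i \<le> N" and F: "Fop i T = Some T'"
  shows "is_ssyt N \<nu> T'"
proof -
  obtain s where s: "s < length T" and ds: "D i T (Suc s) < acnt i (T ! s)"
    and T': "T' = T[s := (T!s)[lcnt i (T!s) + acnt i (T!s) - 1 := Suc i]]"
    using FopC_cases[OF ssyt_sorted[OF T] F] by metis
  define R where "R = T ! s"
  define lt where "lt = lcnt i R"
  define a where "a = acnt i R"
  define j where "j = lt + a - 1"
  have sR: "sorted R" using ssyt_row_sorted[OF T s] R_def by simp
  have a1: "1 \<le> a" using ds a_def R_def by simp
  have iR: "\<And>k. lt \<le> k \<Longrightarrow> k < lt + a \<Longrightarrow> k < length R \<and> R!k = i"
    using row_i_pos[OF sR] lt_def a_def by blast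
  have jl: "j < length R" and Rj: "R ! j = i" using iR[of j] a1 j_def by auto
  have right: "\<And>k. j < k \<Longrightarrow> k < length R \<Longrightarrow> Suc i \<le> R!k"
    using sorted_thr[OF sR, of _ "Suc i"] lcnt_Suc[of i R] lt_def a_def j_def a1 by fastforce
  have left: "R!k \<le> Suc i" if "k < j" for k
    using sorted_nth_mono[OF sR, of k j] jl Rj that by simp
  have sR': "sorted (R[j := Suc i])"
    using sorted_update[OF sR jl] left right by auto
  have T'eq: "T' = T[s := R[j := Suc i]]" using T' R_def lt_def a_def j_def by simp
  have below: "Suc i < T!Suc s!j" if ss: "Suc s < length T" and jb: "j < length (T!Suc s)"
  proof (rule ccontr)
    assume "\<not> Suc i < T!Suc s!j"
    then have le: "T!Suc s!j \<le> Suc i" by simp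
    have sB: "sorted (T!Suc s)" using ssyt_row_sorted[OF T ss] .
    have "\<forall>k. lt \<le> k \<and> k < lt + a \<longrightarrow> k < length (T!Suc s) \<and> T!Suc s!k = Suc i"
    proof (intro allI impI)
      fix k assume k: "lt \<le> k \<and> k < lt + a"
      then have kj: "k \<le> j" using j_def by linarith
      then have kl: "k < length (T!Suc s)" using jb by simp
      have "T!s!k < T!Suc s!k" using ssyt_col[OF T ss kl] .
      moreover have "T!s!k = i" using iR k R_def by simp
      moreover have "T!Suc s!k \<le> T!Suc s!j" using sorted_nth_mono[OF sB kj jb] .
      ultimately show "k < length (T!Suc s) \<and> T!Suc s!k = Suc i" using le kl by simp
    qed
    then have "a \<le> acnt (Suc i) (T!Suc s)" by (rule acnt_ge)
    moreover have "D i T (Suc s) = (D i T (Suc (Suc s)) - acnt i (T!Suc s)) + acnt (Suc i) (T!Suc s)"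
      using D_step[OF ss] df_sorted[OF sB] by simp
    ultimately show False using ds a_def R_def by simp
  qed
  show ?thesis
    unfolding is_ssyt_def
  proof (intro conjI allI impI ballI)
    show "length T' = length \<nu>" using T T'eq unfolding is_ssyt_def by simp
  next
    fix t assume "t < length \<nu>"
    then show "length (T' ! t) = \<nu> ! t" using T T'eq R_def unfolding is_ssyt_def
      by (cases "t = s") (auto simp: nth_list_update)
  next
    fix r x assume r: "r \<in> set T'" and x: "x \<in> set r"
    from r obtain t where t: "t < length T'" "r = T'!t" by (auto simp: in_set_conv_nth)
    have "1 \<le> x \<and> x \<le> N + 1"
    proof (cases "t = s")
      case True
      then have "r = R[j := Suc i]" using t T'eq s by simp
      then have "x = Suc i \<or> x \<in> set R" using x set_update_subset_insert by fastforce
      then show ?thesis using T iN R_def s unfolding is_ssyt_def by (auto)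
    next
      case False
      then have "r = T!t" using t T'eq by simp
      then show ?thesis using T x t T'eq unfolding is_ssyt_def by (metis length_list_update nth_mem)
    qed
    then show "1 \<le> x" "x \<le> N + 1" by auto
  next
    fix r assume r: "r \<in> set T'"
    from r obtain t where t: "t < length T'" "r = T'!t" by (auto simp: in_set_conv_nth)
    show "sorted r"
      using t T'eq sR' ssyt_row_sorted[OF T] by (cases "t = s") (auto simp: nth_list_update)
  next
    fix t k assume tk: "Suc t < length T' \<and> k < length (T' ! Suc t)"
    have tl: "Suc t < length T" using tk T'eq by simp
    show "T' ! t ! k < T' ! Suc t ! k"
    proof (cases "t = s")
      case True
      then have kl: "k < length (T!Suc s)" using tk T'eq by simp
      show ?thesis
      proof (cases "k = j")
        case True
        then show ?thesis using \<open>t = s\<close> T'eq below tl kl jl s by (simp add: nth_list_update)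
      next
        case False
        then show ?thesis using \<open>t = s\<close> T'eq ssyt_col[OF T tl] kl R_def s
          by (simp add: nth_list_update)
      qed
    next
      case False
      note tns = False
      show ?thesis
      proof (cases "Suc t = s")
        case True
        then have kl: "k < length R" using tk T'eq R_def s by (simp add: nth_list_update)
        have c: "T!t!k < R!k" using ssyt_col[OF T tl, of k] kl True R_def by simp
        show ?thesis
        proof (cases "k = j")
          case True
          then show ?thesis using \<open>Suc t = s\<close> T'eq c Rj jl s tns by (simp add: nth_list_update)
        next
          case False
          then show ?thesis using \<open>Suc t = s\<close> T'eq c kl s tns by (simp add: nth_list_update)
        qed
      next
        case False
        then show ?thesis using tns T'eq ssyt_col[OF T tl, of k] tk by (simp add: nth_list_update)
      qed
    qed
  qed
qed

lemma filter_update_len: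
  "j < length xs \<Longrightarrow> length (filter P (xs[j:=v])) + (if P (xs!j) then 1 else 0)
     = length (filter P xs) + (if P v then 1 else 0)"
proof (induction xs arbitrary: j)
  case (Cons x xs)
  show ?case
  proof (cases j)
    case (Suc j')
    then show ?thesis using Cons.IH[of j'] Cons.prems by auto
  qed auto
qed simp

definition tsum :: "nat list list \<Rightarrow> nat" where
  "tsum T = sum_list (map sum_list T)"

lemma tsum_update:
  assumes "s < length T" "j < length (T!s)"
  shows "tsum (T[s := (T!s)[j:=v]]) + T!s!j = tsum T + v"
proof -
  have a: "sum_list ((T!s)[j:=v]) = sum_list (T!s) + v - T!s!j"
    using assms by (simp add: sum_list_update)
  have b: "T!s!j \<le> sum_list (T!s)" using assms by (simp add: elem_le_sum_list)
  have c: "tsum (T[s := (T!s)[j:=v]]) = tsum T + sum_list ((T!s)[j:=v]) - sum_list (T!s)"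
    unfolding tsum_def using assms by (simp add: map_update sum_list_update)
  have d: "sum_list (T!s) \<le> tsum T" unfolding tsum_def
    using assms elem_le_sum_list[of s "map sum_list T"] by simp
  show ?thesis using a b c d by simp
qed

definition umin :: "nat list \<Rightarrow> nat list list" where
  "umin \<nu> = map (\<lambda>t. replicate (\<nu>!t) (Suc t)) [0..<length \<nu>]"

lemma umin_ssyt:
  assumes p: "is_partition \<nu>" and l: "length \<nu> \<le> N + 1"
  shows "is_ssyt N \<nu> (umin \<nu>)"
  unfolding is_ssyt_def umin_def
proof (intro conjI allI impI ballI)
  fix t k assume tk: "Suc t < length (map (\<lambda>t. replicate (\<nu> ! t) (Suc t)) [0..<length \<nu>]) \<and>
    k < length (map (\<lambda>t. replicate (\<nu> ! t) (Suc t)) [0..<length \<nu>] ! Suc t)"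
  then have le: "\<nu>!Suc t \<le> \<nu>!t" using part_mono[OF p, of t "Suc t"] by simp
  have tl: "Suc t < length \<nu>" using tk by simp
  have kl: "k < \<nu>!Suc t" using tk tl by (simp del: upt_Suc)
  show "map (\<lambda>t. replicate (\<nu> ! t) (Suc t)) [0..<length \<nu>] ! t ! k
      < map (\<lambda>t. replicate (\<nu> ! t) (Suc t)) [0..<length \<nu>] ! Suc t ! k" using tk le kl by simp
qed (use l in \<open>auto simp: in_set_conv_nth\<close>)

lemma ssyt_lower:
  assumes p: "is_partition \<nu>" and U: "is_ssyt N \<nu> U"
  shows "t < length U \<Longrightarrow> k < length (U!t) \<Longrightarrow> Suc t \<le> U!t!k"
proof (induction t arbitrary: k)
  case 0 then show ?case using ssyt_entry[OF U] by simp
next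
  case (Suc t)
  have "length (U!Suc t) \<le> length (U!t)" using ssyt_len_mono[OF p U, of t "Suc t"] Suc.prems by simp
  then have "Suc t \<le> U!t!k" using Suc by simp
  moreover have "U!t!k < U!Suc t!k" using ssyt_col[OF U] Suc.prems by simp
  ultimately show ?case by simp
qed

lemma umin_eq:
  assumes U: "is_ssyt N \<nu> U"
    and all: "\<forall>r k. r < length U \<longrightarrow> k < length (U!r) \<longrightarrow> U!r!k = Suc r"
  shows "U = umin \<nu>"
proof (rule nth_equalityI)
  show "length U = length (umin \<nu>)" using ssyt_length[OF U] by (simp add: umin_def)
next
  fix r assume r: "r < length U"
  show "U ! r = umin \<nu> ! r"
    using r all ssyt_len[OF U r] ssyt_length[OF U]
    by (intro nth_equalityI) (auto simp: umin_def)
qed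

lemma E_exists:
  assumes p: "is_partition \<nu>" and U: "is_ssyt N \<nu> U" and ne: "U \<noteq> umin \<nu>"
  shows "\<exists>i V. 1 \<le> i \<and> i \<le> N \<and> is_ssyt N \<nu> V \<and> Fop i V = Some U \<and> tsum V < tsum U"
proof -
  let ?l = "length U"
  have srt: "\<forall>r\<in>set U. sorted r" using ssyt_sorted[OF U] .
  let ?Q = "\<lambda>r. r < ?l \<and> (\<exists>k < length (U!r). U!r!k \<noteq> Suc r)"
  have exQ: "\<exists>r. ?Q r" using umin_eq[OF U] ne by blast
  define r0 where "r0 = (LEAST r. ?Q r)"
  have Qr0: "?Q r0" unfolding r0_def using exQ by (rule LeastI_ex)
  have above: "U!t!k = Suc t" if "t < r0" "k < length (U!t)" for t k
  proof -
    have "\<not> ?Q t" using that(1) unfolding r0_def using not_less_Least by blast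
    then show ?thesis using that Qr0 by auto
  qed
  obtain k0 where k0: "k0 < length (U!r0)" "U!r0!k0 \<noteq> Suc r0" using Qr0 by blast
  define L where "L = length (U!r0)"
  define x where "x = U!r0!(L - 1)"
  have sr0: "sorted (U!r0)" using srt Qr0 by auto
  have "U!r0!k0 \<le> x" unfolding x_def L_def using sorted_nth_mono[OF sr0, of k0 "L - 1"] k0 L_def by simp
  moreover have "Suc r0 \<le> U!r0!k0" using ssyt_lower[OF p U] Qr0 k0 by simp
  ultimately have xgt: "Suc (Suc r0) \<le> x" using k0 by simp
  have xle: "x \<le> N + 1" unfolding x_def L_def using ssyt_entry[OF U, of r0 "length (U!r0) - 1"] Qr0 k0 by simp
  define i where "i = x - 1"
  have i1: "1 \<le> i" and iN: "i \<le> N" and Si: "Suc i = x" and ir0: "Suc r0 \<le> i"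
    using xgt xle i_def by auto
  \<comment> \<open>rows above r0 carry no brackets\<close>
  have Dabove: "D i U t = D i U r0" if "t \<le> r0" for t
    using that
  proof (induction rule: inc_induct)
    case base then show ?case by simp
  next
    case (step t)
    have tl: "t < ?l" using step Qr0 by simp
    have allv: "\<forall>y\<in>set (U!t). y = Suc t" using above[of t] step by (auto simp: in_set_conv_nth)
    have a0: "acnt i (U!t) = 0" "acnt (Suc i) (U!t) = 0"
      using allv ir0 step unfolding acnt_def by (auto simp: filter_empty_conv)
    have st: "sorted (U!t)" using srt tl by simp
    have "df i (D i U (Suc t)) (U!t) = D i U (Suc t)" using df_sorted[OF st] a0 by simp
    then have "D i U t = D i U (Suc t)" using D_step[OF tl] by simp
    then show ?case using step by simp
  qed
  have Lpos: "0 < L" using k0(1) unfolding L_def by linarith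
  have br0: "1 \<le> acnt (Suc i) (U!r0)"
  proof (rule acnt_ge[where m="L-1"])
    show "\<forall>k. L - 1 \<le> k \<and> k < L - 1 + 1 \<longrightarrow> k < length (U!r0) \<and> U!r0!k = Suc i"
    proof (intro allI impI)
      fix k assume "L - 1 \<le> k \<and> k < L - 1 + 1"
      then have "k = L - 1" by simp
      then show "k < length (U!r0) \<and> U!r0!k = Suc i" using Lpos L_def Si x_def by simp
    qed
  qed
  have "D i U r0 = (D i U (Suc r0) - acnt i (U!r0)) + acnt (Suc i) (U!r0)"
    using D_step[of r0 U i] Qr0 df_sorted sr0 by simp
  then have D0: "1 \<le> D i U 0" using Dabove[of 0] br0 by simp
  let ?P = "\<lambda>t. t < ?l \<and> D i U (Suc t) \<le> acnt i (U!t)"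
  have lpos: "0 < ?l" using Qr0 by auto
  have exP: "?P (?l - 1)" using lpos D_ge[of U "Suc (?l - 1)" i] by simp
  define s where "s = (LEAST t. ?P t)"
  have Ps: "?P s" unfolding s_def by (rule LeastI[of ?P, OF exP])
  have notP: "acnt i (U!t) < D i U (Suc t)" if "t < s" for t
  proof -
    have "\<not> ?P t" using that unfolding s_def using not_less_Least by blast
    moreover have "t < ?l" using that Ps by simp
    ultimately show ?thesis by simp
  qed
  have sl: "s < ?l" using Ps by simp
  define R where "R = U!s"
  have sR: "sorted R" using srt sl R_def by simp
  define a where "a = acnt i R"
  define b where "b = acnt (Suc i) R"
  define lt where "lt = lcnt i R"
  have Ds: "D i U s = b"
    using D_step[OF sl] df_sorted[OF sR] Ps R_def b_def by simp
  have b1: "1 \<le> b"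
  proof (rule ccontr)
    assume "\<not> 1 \<le> b"
    then have "D i U s = 0" using Ds by simp
    show False
    proof (cases s)
      case 0 then show False using D0 \<open>D i U s = 0\<close> by simp
    next
      case (Suc s')
      then have "?P s'" using \<open>D i U s = 0\<close> sl by simp
      then show False using notP[of s'] Suc by simp
    qed
  qed
  define j where "j = lcnt (Suc i) R"
  have jeq: "j = lt + a" unfolding j_def lt_def a_def by (rule lcnt_Suc)
  have jl: "j < length R" and Rj: "R!j = Suc i"
    using row_i_pos[OF sR, of "Suc i" j] b1 unfolding j_def b_def by auto
  have Rb: "k < length R \<and> R!k = Suc i" if "j \<le> k" "k < j + b" for k
    using row_i_pos[OF sR, of "Suc i" k] that unfolding j_def b_def by auto
  define V where "V = U[s := R[j := i]]"
  have Vs: "V!s = R[j := i]" unfolding V_def using sl by simp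
  have Vt: "t \<noteq> s \<Longrightarrow> V!t = U!t" for t unfolding V_def by simp
  have lV: "length V = ?l" unfolding V_def by simp
  have left: "R!k \<le> i" if "k < j" for k
    using sorted_thr[OF sR, of k "Suc i"] that jl unfolding j_def by simp
  have right: "i \<le> R!k" if "j < k" "k < length R" for k
    using sorted_nth_mono[OF sR, of j k] that Rj by simp
  have sRV: "sorted (R[j := i])"
    using sorted_update[OF sR jl] left right by auto
  have aboveV: "U!(s-1)!j < i" if "0 < s"
  proof -
    have s1: "Suc (s-1) < ?l" and s1': "Suc (s - 1) = s" using that sl by auto
    have lenle: "length R \<le> length (U!(s-1))" using ssyt_len_mono[OF p U, of "s-1" s] sl R_def by simp
    have lt1: "U!(s-1)!j < Suc i" using ssyt_col[OF U s1, of j] s1' jl Rj R_def by simp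
    show ?thesis
    proof (rule ccontr)
      assume "\<not> U!(s-1)!j < i"
      then have eqi: "U!(s-1)!j = i" using lt1 by simp
      have sA: "sorted (U!(s-1))" using srt sl by simp
      have "\<forall>k. j \<le> k \<and> k < j + b \<longrightarrow> k < length (U!(s-1)) \<and> U!(s-1)!k = i"
      proof (intro allI impI)
        fix k assume k: "j \<le> k \<and> k < j + b"
        have kl: "k < length R" "R!k = Suc i" using Rb k by auto
        have "U!(s-1)!k < R!k" using ssyt_col[OF U s1, of k] s1' kl R_def by simp
        moreover have "U!(s-1)!j \<le> U!(s-1)!k" using sorted_nth_mono[OF sA, of j k] k kl lenle by simp
        ultimately show "k < length (U!(s-1)) \<and> U!(s-1)!k = i" using kl eqi lenle by simp
      qed
      then have "b \<le> acnt i (U!(s-1))" by (rule acnt_ge)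
      then have "?P (s-1)" using Ds s1' sl by simp
      then show False using notP[of "s-1"] that by simp
    qed
  qed
  have VS: "is_ssyt N \<nu> V"
    unfolding is_ssyt_def
  proof (intro conjI allI impI ballI)
    show "length V = length \<nu>" using lV ssyt_length[OF U] by simp
  next
    fix t assume "t < length \<nu>"
    then show "length (V ! t) = \<nu> ! t" using ssyt_len[OF U] ssyt_length[OF U] Vs Vt R_def
      by (cases "t = s") auto
  next
    fix r y assume r: "r \<in> set V" and y: "y \<in> set r"
    from r obtain t where t: "t < length V" "r = V!t" by (auto simp: in_set_conv_nth)
    have "1 \<le> y \<and> y \<le> N + 1"
    proof (cases "t = s")
      case True
      then have "y = i \<or> y \<in> set R" using y t Vs set_update_subset_insert by fastforce
      then show ?thesis using U i1 iN R_def sl unfolding is_ssyt_def by auto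
    next
      case False
      then show ?thesis using U y t Vt lV unfolding is_ssyt_def by (metis nth_mem)
    qed
    then show "1 \<le> y" "y \<le> N + 1" by auto
  next
    fix r assume r: "r \<in> set V"
    from r obtain t where t: "t < length V" "r = V!t" by (auto simp: in_set_conv_nth)
    show "sorted r" using t Vs Vt sRV srt lV by (cases "t = s") auto
  next
    fix t k assume tk: "Suc t < length V \<and> k < length (V ! Suc t)"
    have tl: "Suc t < ?l" using tk lV by simp
    show "V ! t ! k < V ! Suc t ! k"
    proof (cases "t = s")
      case True
      then have kl: "k < length (U!Suc t)" using tk Vt by simp
      have c: "U!s!k < U!Suc s!k" using ssyt_col[OF U tl kl] True by simp
      show ?thesis using True Vt[of "Suc t"] Vs c R_def Rj jl
        by (cases "k = j") (auto simp: nth_list_update)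
    next
      case False
      note tns = False
      show ?thesis
      proof (cases "Suc t = s")
        case True
        then have kl: "k < length R" using tk Vs by simp
        have c: "U!t!k < R!k" using ssyt_col[OF U tl, of k] kl True R_def by simp
        show ?thesis
        proof (cases "k = j")
          case True
          have "s - 1 = t" using \<open>Suc t = s\<close> by simp
          then have "U!t!j < i" using aboveV \<open>Suc t = s\<close> by auto
          then show ?thesis using \<open>Suc t = s\<close> True Vt[OF tns] Vs jl by (simp add: nth_list_update)
        next
          case False
          then show ?thesis using \<open>Suc t = s\<close> c Vt[OF tns] Vs by (simp add: nth_list_update)
        qed
      next
        case False
        then show ?thesis using tns Vt ssyt_col[OF U tl, of k] tk by simp
      qed
    qed
  qed
  have srtV: "\<forall>r\<in>set V. sorted r" using ssyt_sorted[OF VS] .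
  have cA: "acnt i (R[j := i]) = a + 1"
    using filter_update_len[OF jl, of "\<lambda>y. y = i" i] Rj unfolding a_def acnt_def by simp
  have cB: "acnt (Suc i) (R[j := i]) = b - 1"
    using filter_update_len[OF jl, of "\<lambda>y. y = Suc i" i] Rj unfolding b_def acnt_def by simp
  have cL: "lcnt i (R[j := i]) = lt"
    using filter_update_len[OF jl, of "\<lambda>y. y < i" i] Rj unfolding lt_def lcnt_def by simp
  have DVhi: "D i V t = D i U t" if "s < t" for t
    unfolding D_def V_def using that by simp
  have DV: "D i V t = D i U t - 1 \<and> 1 \<le> D i U t" if "t \<le> s" for t
    using that
  proof (induction rule: inc_induct)
    case base
    have "D i V s = (D i U (Suc s) - (a + 1)) + (b - 1)"
      using D_step[of s V i] sl lV df_sorted[OF sRV] Vs cA cB DVhi[of "Suc s"] by simp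
    then show ?case using Ds b1 Ps R_def a_def by simp
  next
    case (step t)
    have tl: "t < ?l" using step sl by simp
    have ts: "t \<noteq> s" using step by simp
    have st: "sorted (U!t)" using srt tl by simp
    have n: "acnt i (U!t) < D i U (Suc t)" using notP step by simp
    have e1: "D i U t = (D i U (Suc t) - acnt i (U!t)) + acnt (Suc i) (U!t)"
      using D_step[OF tl] df_sorted[OF st] by simp
    have e2: "D i V t = (D i V (Suc t) - acnt i (U!t)) + acnt (Suc i) (U!t)"
      using D_step[of t V] tl lV df_sorted[OF st] Vt[OF ts] by simp
    show ?case using e1 e2 step.IH n by simp
  qed
  have F: "Fop i V = Some (V[s := (V!s)[lcnt i (V!s) + acnt i (V!s) - 1 := Suc i]])"
  proof (rule FopC_some[OF srtV])
    show "s < length V" using sl lV by simp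
    show "D i V (Suc s) < acnt i (V ! s)" using DVhi[of "Suc s"] Vs cA Ps R_def a_def by simp
    show "\<forall>t<s. acnt i (V ! t) \<le> D i V (Suc t)"
    proof (intro allI impI)
      fix t assume ts: "t < s"
      have "D i V (Suc t) = D i U (Suc t) - 1" using DV[of "Suc t"] ts by simp
      then show "acnt i (V ! t) \<le> D i V (Suc t)" using notP[OF ts] Vt[of t] ts by simp
    qed
  qed
  have "V[s := (V!s)[lcnt i (V!s) + acnt i (V!s) - 1 := Suc i]] = U"
    using Vs cA cL jeq Rj jl sl unfolding V_def R_def by simp (metis list_update_id)
  with F have FV: "Fop i V = Some U" by simp
  have "tsum V + Suc i = tsum U + i" unfolding V_def R_def
    using tsum_update[of s U j i] sl jl Rj R_def by simp
  then have "tsum V < tsum U" by simp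
  then show ?thesis using i1 iN VS FV by blast
qed

lemma Ble_min:
  assumes p: "is_partition \<nu>" and l: "length \<nu> \<le> N + 1"
  shows "is_ssyt N \<nu> U \<Longrightarrow> Ble N \<nu> (umin \<nu>) U"
proof (induction "tsum U" arbitrary: U rule: less_induct)
  case less
  show ?case
  proof (cases "U = umin \<nu>")
    case True then show ?thesis unfolding Ble_def by simp
  next
    case False
    obtain i V where iV: "1 \<le> i" "i \<le> N" "is_ssyt N \<nu> V" "Fop i V = Some U" "tsum V < tsum U"
      using E_exists[OF p less.prems False] by blast
    have "Ble N \<nu> (umin \<nu>) V" using less.hyps iV by blast
    moreover have "Bstep N \<nu> V U" unfolding Bstep_def Btab_def using iV less.prems by auto
    ultimately show ?thesis unfolding Ble_def by (rule rtranclp.rtrancl_into_rtrancl)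
  qed
qed

definition hgt :: "nat list \<Rightarrow> nat \<Rightarrow> nat" where
  "hgt \<nu> k = length (filter (\<lambda>x. k < x) \<nu>)"

lemma hgt_iff_aux:
  fixes \<nu> :: "nat list"
  shows "sorted_wrt (\<lambda>x y. y \<le> x) \<nu> \<Longrightarrow> (t < length (filter (\<lambda>x. k < x) \<nu>) \<longleftrightarrow> t < length \<nu> \<and> k < \<nu>!t)"
proof (induction \<nu> arbitrary: t)
  case Nil then show ?case by simp
next
  case (Cons x xs)
  show ?case
  proof (cases "k < x")
    case True
    then show ?thesis using Cons by (cases t) auto
  next
    case False
    have "\<forall>y\<in>set xs. y \<le> x" using Cons.prems by simp
    then have "\<forall>y\<in>set (x # xs). \<not> k < y"
    proof (intro ballI)
      fix y assume "y \<in> set (x # xs)"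
      then have "y \<le> x" using \<open>\<forall>y\<in>set xs. y \<le> x\<close> by auto
      then show "\<not> k < y" using False by simp
    qed
    then have "filter (\<lambda>x. k < x) (x # xs) = []" by (simp add: filter_empty_conv)
    moreover have "\<not> (t < length (x # xs) \<and> k < (x # xs)!t)"
      using Cons.prems False by (cases t) (auto, meson le_trans not_le nth_mem)
    ultimately show ?thesis by simp
  qed
qed

lemma hgt_iff: "is_partition \<nu> \<Longrightarrow> (t < hgt \<nu> k \<longleftrightarrow> t < length \<nu> \<and> k < \<nu>!t)"
  unfolding hgt_def is_partition_def using hgt_iff_aux
  by (metis sorted_wrt_rev)

lemma hgt_le: "hgt \<nu> k \<le> length \<nu>"
  unfolding hgt_def by simp

lemma length_filter_mono': "(\<And>x. P x \<Longrightarrow> Q x) \<Longrightarrow> length (filter P xs) \<le> length (filter Q xs)"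
  by (induction xs) auto

lemma hgt_anti: "k \<le> k' \<Longrightarrow> hgt \<nu> k' \<le> hgt \<nu> k"
  unfolding hgt_def by (rule length_filter_mono') simp

definition umax :: "nat \<Rightarrow> nat list \<Rightarrow> nat list list" where
  "umax N \<nu> = map (\<lambda>t. map (\<lambda>k. N + 2 + t - hgt \<nu> k) [0..<\<nu>!t]) [0..<length \<nu>]"

lemma umax_length: "length (umax N \<nu>) = length \<nu>" unfolding umax_def by simp
lemma umax_row_length: "t < length \<nu> \<Longrightarrow> length (umax N \<nu> ! t) = \<nu>!t" unfolding umax_def by simp
lemma umax_nth: "t < length \<nu> \<Longrightarrow> k < \<nu>!t \<Longrightarrow> umax N \<nu> ! t ! k = N + 2 + t - hgt \<nu> k"
  unfolding umax_def by simp

lemma umax_ssyt: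
  assumes p: "is_partition \<nu>" and l: "length \<nu> \<le> N + 1"
  shows "is_ssyt N \<nu> (umax N \<nu>)"
  unfolding is_ssyt_def
proof (intro conjI allI impI ballI)
  show "length (umax N \<nu>) = length \<nu>" by (rule umax_length)
next
  fix t assume "t < length \<nu>" then show "length (umax N \<nu> ! t) = \<nu> ! t" by (rule umax_row_length)
next
  fix r x assume r: "r \<in> set (umax N \<nu>)" and x: "x \<in> set r"
  from r obtain t where t: "t < length \<nu>" "r = umax N \<nu> ! t" by (auto simp: in_set_conv_nth umax_length)
  from x t obtain k where k: "k < \<nu>!t" "x = N + 2 + t - hgt \<nu> k"
    by (auto simp: in_set_conv_nth umax_row_length umax_nth)
  have "t < hgt \<nu> k" using hgt_iff[OF p] t k by simp
  moreover have "hgt \<nu> k \<le> N + 1" using hgt_le[of \<nu> k] l by simp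
  ultimately show "1 \<le> x" "x \<le> N + 1" using k by auto
next
  fix r assume r: "r \<in> set (umax N \<nu>)"
  from r obtain t where t: "t < length \<nu>" "r = umax N \<nu> ! t" by (auto simp: in_set_conv_nth umax_length)
  show "sorted r" unfolding sorted_iff_nth_mono
  proof (intro allI impI)
    fix k k' assume kk: "k \<le> k'" "k' < length r"
    then show "r ! k \<le> r ! k'" using t umax_nth[of t \<nu> k] umax_nth[of t \<nu> k'] umax_row_length[of t]
      hgt_anti[OF kk(1), of \<nu>] by simp
  qed
next
  fix t k assume tk: "Suc t < length (umax N \<nu>) \<and> k < length (umax N \<nu> ! Suc t)"
  then have tl: "Suc t < length \<nu>" and kl: "k < \<nu>!Suc t" by (auto simp: umax_length umax_row_length)
  have kl0: "k < \<nu>!t" using part_mono[OF p, of t "Suc t"] tl kl by simp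
  have "hgt \<nu> k \<le> N + 1" using hgt_le[of \<nu> k] l by simp
  then show "umax N \<nu> ! t ! k < umax N \<nu> ! Suc t ! k"
    using umax_nth[of t \<nu> k N] umax_nth[of "Suc t" \<nu> k N] tl kl kl0 by simp
qed

lemma umax_upper:
  assumes p: "is_partition \<nu>" and U: "is_ssyt N \<nu> U" and t: "t < length \<nu>" and k: "k < \<nu>!t"
  shows "U!t!k \<le> N + 2 + t - hgt \<nu> k"
proof -
  define h where "h = hgt \<nu> k"
  have th: "t < h" using hgt_iff[OF p] t k h_def by simp
  have hl: "h \<le> length \<nu>" using hgt_le h_def by simp
  have lenU: "length U = length \<nu>" using ssyt_length[OF U] .
  have key: "U!t'!k + (h - 1 - t') \<le> N + 1" if "t \<le> t'" "t' \<le> h - 1" for t'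
    using that(2,1)
  proof (induction rule: inc_induct)
    case base
    have "h - 1 < length \<nu>" "k < \<nu>!(h - 1)" using hgt_iff[OF p, of "h-1" k] th h_def by auto
    then show ?case using ssyt_entry[OF U, of "h-1" k] lenU ssyt_len[OF U] by simp
  next
    case (step n)
    have "Suc n < h" using step by simp
    then have sl: "Suc n < length U" and kl: "k < length (U!Suc n)"
      using hgt_iff[OF p, of "Suc n" k] h_def lenU ssyt_len[OF U] by auto
    have lt: "U!n!k < U!Suc n!k" using ssyt_col[OF U sl kl] .
    have e: "h - 1 - n = Suc (h - 1 - Suc n)" using \<open>Suc n < h\<close> by simp
    have "U!Suc n!k + (h - 1 - Suc n) \<le> N + 1" using step.IH step by simp
    then show ?case using lt e by linarith
  qed
  have "U!t!k + (h - 1 - t) \<le> N + 1" using key[of t] th by simp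
  then show ?thesis using th h_def by arith
qed

lemma umax_col:
  assumes p: "is_partition \<nu>" and l: "length \<nu> \<le> N + 1" and tl: "Suc t < length \<nu>" and kl: "k < \<nu>!Suc t"
  shows "umax N \<nu> ! Suc t ! k = Suc (umax N \<nu> ! t ! k)" "k < \<nu>!t"
proof -
  show kl0: "k < \<nu>!t" using part_mono[OF p, of t "Suc t"] tl kl by simp
  have "t < hgt \<nu> k" using hgt_iff[OF p] tl kl0 by simp
  moreover have "hgt \<nu> k \<le> N + 1" using hgt_le[of \<nu> k] l by simp
  ultimately show "umax N \<nu> ! Suc t ! k = Suc (umax N \<nu> ! t ! k)"
    using umax_nth[of t \<nu> k N] umax_nth[of "Suc t" \<nu> k N] tl kl kl0 by simp
qed

lemma FopC_ex:
  assumes srt: "\<forall>r\<in>set T. sorted r" and t: "t < length T" and d: "D i T (Suc t) < acnt i (T ! t)"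
  shows "Fop i T \<noteq> None"
proof
  assume "Fop i T = None"
  let ?P = "\<lambda>t. t < length T \<and> D i T (Suc t) < acnt i (T ! t)"
  define s where "s = (LEAST t. ?P t)"
  have Ps: "?P s" unfolding s_def by (rule LeastI[of ?P, OF conjI[OF t d]])
  have mn: "\<forall>t<s. acnt i (T!t) \<le> D i T (Suc t)"
  proof (intro allI impI)
    fix t' assume "t' < s"
    then have "\<not> ?P t'" unfolding s_def using not_less_Least by blast
    then show "acnt i (T!t') \<le> D i T (Suc t')" using \<open>t' < s\<close> Ps by auto
  qed
  show False using FopC_some[OF srt _ _ mn] Ps \<open>Fop i T = None\<close> by simp
qed

lemma F_exists:
  assumes p: "is_partition \<nu>" and l: "length \<nu> \<le> N + 1" and U: "is_ssyt N \<nu> U"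
    and ne: "U \<noteq> umax N \<nu>"
  shows "\<exists>i. 1 \<le> i \<and> i \<le> N \<and> Fop i U \<noteq> None"
proof -
  let ?W = "umax N \<nu>"
  let ?l = "length \<nu>"
  have lenU: "length U = ?l" using ssyt_length[OF U] .
  have rlU: "t < ?l \<Longrightarrow> length (U!t) = \<nu>!t" for t using ssyt_len[OF U] lenU by simp
  have srt: "\<forall>r\<in>set U. sorted r" using ssyt_sorted[OF U] .
  let ?Q = "\<lambda>r. r < ?l \<and> (\<exists>k < \<nu>!r. U!r!k \<noteq> ?W!r!k)"
  have exQ: "\<exists>r. ?Q r"
  proof (rule ccontr)
    assume "\<not> (\<exists>r. ?Q r)"
    then have "U = ?W"
      by (intro nth_equalityI) (auto simp: lenU umax_length rlU umax_row_length intro!: nth_equalityI)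
    with ne show False by simp
  qed
  define r where "r = Max {r. ?Q r}"
  have fin: "finite {r. ?Q r}" by (rule finite_subset[of _ "{..<?l}"]) auto
  have Qr: "?Q r" unfolding r_def using Max_in[OF fin] exQ by auto
  have below: "U!t!k = ?W!t!k" if "r < t" "t < ?l" "k < \<nu>!t" for t k
  proof (rule ccontr)
    assume "U!t!k \<noteq> ?W!t!k"
    then have "?Q t" using that by auto
    then have "t \<le> r" unfolding r_def using Max_ge[OF fin] by auto
    then show False using that by simp
  qed
  have rl: "r < ?l" using Qr by simp
  let ?J = "\<lambda>k. k < \<nu>!r \<and> U!r!k \<noteq> ?W!r!k"
  define j where "j = (LEAST k. ?J k)"
  have Jj: "?J j" unfolding j_def using Qr by (metis (mono_tags, lifting) LeastI_ex)
  have leftj: "U!r!k = ?W!r!k" if "k < j" "k < \<nu>!r" for k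
    using not_less_Least[of k ?J] that unfolding j_def by blast
  define i where "i = U!r!j"
  have ilt: "i < ?W!r!j"
    using umax_upper[OF p U rl, of j] umax_nth[OF rl, of j N] Jj i_def by simp
  have Wle: "?W!r!j \<le> N + 1"
    using umax_ssyt[OF p l] rl Jj ssyt_entry[of N \<nu> ?W r j] umax_length umax_row_length by auto
  have i1: "1 \<le> i" using ssyt_entry[OF U, of r j] rl Jj lenU rlU i_def by simp
  have iN: "i \<le> N" using ilt Wle by simp
  have colcnt: "acnt (Suc i) (U!Suc t) \<le> acnt i (U!t)" if "r < t" "Suc t < ?l" for t
  proof -
    have "{k. k < length (U!Suc t) \<and> U!Suc t!k = Suc i} \<subseteq> {k. k < length (U!t) \<and> U!t!k = i}"
    proof
      fix k assume "k \<in> {k. k < length (U!Suc t) \<and> U!Suc t!k = Suc i}"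
      then have kl: "k < \<nu>!Suc t" and v: "U!Suc t!k = Suc i" using rlU that by auto
      have kl0: "k < \<nu>!t" using umax_col[OF p l that(2) kl] by simp
      have "?W!Suc t!k = Suc (?W!t!k)" using umax_col[OF p l that(2) kl] by simp
      moreover have "U!Suc t!k = ?W!Suc t!k" using below[of "Suc t" k] that kl by simp
      moreover have "U!t!k = ?W!t!k" using below[of t k] that kl0 by simp
      ultimately show "k \<in> {k. k < length (U!t) \<and> U!t!k = i}" using v kl0 rlU that by simp
    qed
    then show ?thesis unfolding acnt_card by (intro card_mono) auto
  qed
  have Dval: "D i U t = (if t < ?l then acnt (Suc i) (U!t) else 0)" if "Suc r \<le> t" "t \<le> ?l" for t
    using that(2,1)
  proof (induction rule: inc_induct)
    case base then show ?case using D_len[of i U] lenU by simp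
  next
    case (step t)
    have tl: "t < length U" using step lenU by simp
    have st: "sorted (U!t)" using srt tl by simp
    have "D i U (Suc t) \<le> acnt i (U!t)"
      using step.IH colcnt[of t] step by auto
    then show ?case using D_step[OF tl] df_sorted[OF st] step by simp
  qed
  have ar: "D i U (Suc r) < acnt i (U!r)"
  proof -
    have sub1: "{k. k < length (U!Suc r) \<and> U!Suc r!k = Suc i} \<subseteq> {k. k < j \<and> U!r!k = i}"
      if sl: "Suc r < ?l"
    proof
      fix k assume "k \<in> {k. k < length (U!Suc r) \<and> U!Suc r!k = Suc i}"
      then have kl: "k < \<nu>!Suc r" and v: "U!Suc r!k = Suc i" using rlU sl by auto
      have kl0: "k < \<nu>!r" using umax_col[OF p l sl kl] by simp
      have Wc: "?W!Suc r!k = Suc (?W!r!k)" using umax_col[OF p l sl kl] by simp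
      have Ub: "U!Suc r!k = ?W!Suc r!k" using below[of "Suc r" k] sl kl by simp
      have Wrk: "?W!r!k = i" using Wc Ub v by simp
      have kj: "k < j"
      proof (rule ccontr)
        assume "\<not> k < j"
        then have "?W!r!j \<le> ?W!r!k"
          using umax_ssyt[OF p l] rl kl0 ssyt_row_sorted[of N \<nu> ?W r] umax_length umax_row_length
            sorted_nth_mono[of "?W!r" j k] by simp
        then show False using Wrk ilt by simp
      qed
      show "k \<in> {k. k < j \<and> U!r!k = i}" using kj leftj[OF kj] kl0 Wrk by simp
    qed
    have sub2: "{k. k < j \<and> U!r!k = i} \<union> {j} \<subseteq> {k. k < length (U!r) \<and> U!r!k = i}"
      using Jj rlU rl i_def by auto
    have cu: "card ({k. k < j \<and> U!r!k = i} \<union> {j}) = Suc (card {k. k < j \<and> U!r!k = i})"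
      by (subst card_Un_disjoint) auto
    have c2: "Suc (card {k. k < j \<and> U!r!k = i}) \<le> acnt i (U!r)"
      unfolding acnt_card using card_mono[OF _ sub2] cu by simp
    have c: "(if Suc r < ?l then acnt (Suc i) (U!Suc r) else 0) < acnt i (U!r)"
    proof (cases "Suc r < ?l")
      case True
      have "acnt (Suc i) (U!Suc r) \<le> card {k. k < j \<and> U!r!k = i}"
        unfolding acnt_card using card_mono[OF _ sub1[OF True]] by simp
      then show ?thesis using True c2 by simp
    next
      case False then show ?thesis using c2 by simp
    qed
    show ?thesis using Dval[of "Suc r"] rl c by simp
  qed
  have "Fop i U \<noteq> None" using FopC_ex[OF srt _ ar] rl lenU by simp
  then show ?thesis using i1 iN by blast
qed

lemma sum_list_mono2: "list_all2 (\<le>) xs ys \<Longrightarrow> sum_list xs \<le> (sum_list ys :: nat)"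
  by (induction rule: list_all2_induct) auto

lemma tsum_le_umax:
  assumes p: "is_partition \<nu>" and U: "is_ssyt N \<nu> U"
  shows "tsum U \<le> tsum (umax N \<nu>)"
proof -
  have "list_all2 (\<le>) (map sum_list U) (map sum_list (umax N \<nu>))"
  proof (rule list_all2_all_nthI)
    show "length (map sum_list U) = length (map sum_list (umax N \<nu>))"
      using ssyt_length[OF U] umax_length by simp
  next
    fix t assume "t < length (map sum_list U)"
    then have t: "t < length \<nu>" using ssyt_length[OF U] by simp
    have "list_all2 (\<le>) (U!t) (umax N \<nu> ! t)"
      using ssyt_len[OF U] ssyt_length[OF U] umax_row_length[OF t] umax_upper[OF p U t] umax_nth[OF t] t
      by (intro list_all2_all_nthI) auto
    then show "map sum_list U ! t \<le> map sum_list (umax N \<nu>) ! t"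
      using t ssyt_length[OF U] umax_length sum_list_mono2 by simp
  qed
  then show ?thesis unfolding tsum_def by (rule sum_list_mono2)
qed

lemma Fop_tsum:
  assumes srt: "\<forall>r\<in>set T. sorted r" and F: "Fop i T = Some T'"
  shows "tsum T' = Suc (tsum T)"
proof -
  obtain s where s: "s < length T" and ds: "D i T (Suc s) < acnt i (T ! s)"
    and T': "T' = T[s := (T!s)[lcnt i (T!s) + acnt i (T!s) - 1 := Suc i]]"
    using FopC_cases[OF srt F] by metis
  have sR: "sorted (T!s)" using srt s by simp
  have "lcnt i (T!s) + acnt i (T!s) - 1 < length (T!s) \<and> T!s!(lcnt i (T!s) + acnt i (T!s) - 1) = i"
    using row_i_pos[OF sR, of i "lcnt i (T!s) + acnt i (T!s) - 1"] ds by simp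
  then show ?thesis using tsum_update[OF s, of "lcnt i (T!s) + acnt i (T!s) - 1" "Suc i"] T' by simp
qed

lemma Ble_max:
  assumes p: "is_partition \<nu>" and l: "length \<nu> \<le> N + 1"
  shows "is_ssyt N \<nu> U \<Longrightarrow> Ble N \<nu> U (umax N \<nu>)"
proof (induction "tsum (umax N \<nu>) - tsum U" arbitrary: U rule: less_induct)
  case less
  show ?case
  proof (cases "U = umax N \<nu>")
    case True then show ?thesis unfolding Ble_def by simp
  next
    case False
    obtain i where i: "1 \<le> i" "i \<le> N" "Fop i U \<noteq> None" using F_exists[OF p l less.prems False] by blast
    then obtain U' where U': "Fop i U = Some U'" by blast
    have U'S: "is_ssyt N \<nu> U'" using F_preserves[OF less.prems i(2) U'] .
    have ts: "tsum U' = Suc (tsum U)" using Fop_tsum[OF ssyt_sorted[OF less.prems] U'] .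
    have "tsum U' \<le> tsum (umax N \<nu>)" using tsum_le_umax[OF p U'S] .
    then have "Ble N \<nu> U' (umax N \<nu>)" using less.hyps[OF _ U'S] ts by simp
    moreover have "Bstep N \<nu> U U'" unfolding Bstep_def Btab_def using i U' U'S less.prems by auto
    ultimately show ?thesis unfolding Ble_def by (metis converse_rtranclp_into_rtranclp)
  qed
qed

lemma rw_append3: "reading_word (A @ B @ C) = reading_word C @ reading_word B @ reading_word A"
  unfolding reading_word_def by simp

lemma rw_length: "length (reading_word T) = sum_list (map length T)"
  unfolding reading_word_def by (simp add: length_concat rev_map[symmetric])

lemma unword_append3:
  assumes "length wA = length (reading_word A)" "length wB = length (reading_word B)"
    "length wC = length (reading_word C)"
  shows "unword (A @ B @ C) (wC @ wB @ wA) = unword A wA @ unword B wB @ unword C wC"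
proof -
  have sC: "sum_list (rev (map length C)) = length wC" using assms(3) rw_length by simp
  have sB: "sum_list (rev (map length B)) = length wB" using assms(2) rw_length by simp
  have "split_by (rev (map length C) @ rev (map length B) @ rev (map length A)) (wC @ wB @ wA)
    = split_by (rev (map length C)) wC @ split_by (rev (map length B)) wB @ split_by (rev (map length A)) wA"
    using sC sB by (simp add: split_by_append_ls split_by_append_w)
  then show ?thesis unfolding unword_def by simp
qed

lemma unword_map:
  "unword (map (map g) U) (map g w) = map (map g) (unword U w)"
  unfolding unword_def by (simp add: split_by_map rev_map comp_def)

lemma Fop_word:
  assumes "Fop i X = Some Y"
  shows "\<exists>p. p < length (reading_word X) \<and> reading_word X ! p = i \<and>
     reading_word Y = (reading_word X)[p := Suc i]"
proof -
  let ?w = "reading_word X"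
  let ?u = "uc i 0 0 ?w"
  have ne: "?u \<noteq> []" and Y: "Y = unword X (?w[last ?u := Suc i])"
    using assms unfolding Fop_unword Let_def by (auto split: if_splits)
  have lm: "last ?u \<in> set ?u" using ne by simp
  from uc_mem[OF lm] have pl: "last ?u < length ?w" and pv: "?w ! last ?u = i" by auto
  have sl: "sum_list (map length (rev X)) = length (?w[last ?u := Suc i])"
    using rw_length[of X] by (simp add: rev_map[symmetric])
  have "reading_word Y = ?w[last ?u := Suc i]"
    unfolding Y unword_def
    using concat_split_by[OF sl] by (simp add: reading_word_def rev_map)
  then show ?thesis using pl pv by blast
qed

lemma Bstep_word: "Bstep N \<nu> X Y \<Longrightarrow> list_all2 (\<le>) (reading_word X) (reading_word Y)"
proof -
  assume "Bstep N \<nu> X Y"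
  then obtain i where "Fop i X = Some Y" unfolding Bstep_def by blast
  then obtain p where p: "p < length (reading_word X)" "reading_word X ! p = i"
    "reading_word Y = (reading_word X)[p := Suc i]" using Fop_word by blast
  show ?thesis unfolding p(3) list_all2_conv_all_nth
    using p(1,2) by (auto simp: nth_list_update)
qed

lemma Ble_word: "Ble N \<nu> X Y \<Longrightarrow> list_all2 (\<le>) (reading_word X) (reading_word Y)"
  unfolding Ble_def
proof (induction rule: rtranclp_induct)
  case base then show ?case by (simp add: list_all2_refl)
next
  case (step y z)
  then show ?case using Bstep_word[OF step(2)] list_all2_trans[of "(\<le>)" "(\<le>)" "(\<le>)"]
    by (meson order_trans)
qed

lemma rtranclp_map:
  assumes "r\<^sup>*\<^sup>* x y" "\<And>x y. r x y \<Longrightarrow> r' (h x) (h y)"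
  shows "r'\<^sup>*\<^sup>* (h x) (h y)"
  using assms(1)
proof (induction rule: rtranclp_induct)
  case (step y z) then show ?case using assms(2) by (meson rtranclp.rtrancl_into_rtrancl)
qed simp

locale emb =
  fixes lam :: "nat list" and a b n :: nat
  assumes p: "is_partition lam" and a1: "1 \<le> a" and ab: "a \<le> b"
    and bl: "b \<le> length lam" and ln: "length lam \<le> n"
begin

definition "c = a - 1"
definition "m = b - c"
definition "mu = drop c (take b lam)"
definition "MM = n - length lam + m"
definition "tp = map (\<lambda>t. replicate (lam!t) (Suc t)) [0..<c]"
definition "bt = map (\<lambda>t. replicate (lam!t) (n + 2 + t - length lam)) [b..<length lam]"
definition "g = (\<lambda>x::nat. x + c)"
definition "f U = tp @ map (map g) U @ bt"
definition "wb = reading_word bt"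
definition "wt = reading_word tp"

lemma cb: "c < b" "c + m = b" "1 \<le> m" unfolding c_def m_def using a1 ab by auto
lemma MMc: "MM + c = n - length lam + b" unfolding MM_def using cb by simp
lemma MMc2: "MM + c \<le> n" using MMc bl ln by simp
lemma mu_len: "length mu = m" unfolding mu_def m_def using bl by simp
lemma mu_nth: "t < m \<Longrightarrow> mu!t = lam!(c + t)" unfolding mu_def using cb bl by simp
lemma m_le: "m \<le> MM" unfolding MM_def using ln by simp
lemma mu_part: "is_partition mu"
  unfolding is_partition_def
proof
  show "sorted (rev mu)" unfolding sorted_rev_iff_nth_mono
    using mu_nth mu_len part_mono[OF p] cb bl by auto
  show "\<forall>x\<in>set mu. 0 < x" using p unfolding is_partition_def mu_def
    by (meson in_set_dropD in_set_takeD)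
qed
lemma mu_l: "length mu \<le> MM + 1" using mu_len m_le by simp

lemma len_top: "length tp = c" unfolding tp_def by simp
lemma len_bot: "length bt = length lam - b" unfolding bt_def by simp

lemma f_len: "length U = m \<Longrightarrow> length (f U) = length lam"
  unfolding f_def using len_top len_bot cb bl by simp

lemma f_nth:
  assumes "length U = m" "t < length lam"
  shows "f U ! t = (if t < c then replicate (lam!t) (Suc t)
     else if t < b then map g (U!(t - c)) else replicate (lam!t) (n + 2 + t - length lam))"
proof -
  have e: "f U ! t = (if t < c then tp!t else if t - c < m then map (map g) U ! (t - c)
      else bt!(t - c - m))"
    unfolding f_def using assms len_top by (simp add: nth_append)
  have bcm: "b = c + m" using cb(2) by simp
  show ?thesis
  proof (cases "t < c")
    case True then show ?thesis using e unfolding tp_def by simp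
  next
    case False
    show ?thesis
    proof (cases "t < b")
      case True
      then have "t - c < m" using False bcm by simp
      then show ?thesis using e False True assms(1) by simp
    next
      case nb: False
      have tb: "t - c - m = t - b" using bcm by simp
      have "[b..<length lam] ! (t - b) = t" using nb assms(2) by (simp add: nth_upt)
      then have "bt!(t - b) = replicate (lam!t) (n + 2 + t - length lam)"
        unfolding bt_def using nb assms(2) by simp
      moreover have "\<not> t - c < m" using nb bcm by simp
      ultimately show ?thesis using e False nb tb by simp
    qed
  qed
qed

lemma rw_f: "reading_word (f U) = wb @ map g (reading_word U) @ wt"
  unfolding f_def wb_def wt_def rw_append3
  by (simp add: reading_word_def map_concat rev_map)

lemma wb_vals: "x \<in> set wb \<Longrightarrow> MM + c + 2 \<le> x"
  unfolding wb_def bt_def reading_word_def using MMc ln by auto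

lemma wt_vals: "x \<in> set wt \<Longrightarrow> x \<le> c"
  unfolding wt_def tp_def reading_word_def by auto

lemma ssyt_vals: "is_ssyt N \<nu> U \<Longrightarrow> x \<in> set (reading_word U) \<Longrightarrow> 1 \<le> x \<and> x \<le> N + 1"
  unfolding reading_word_def is_ssyt_def by auto

lemma f_ssyt:
  assumes U: "is_ssyt MM mu U"
  shows "is_ssyt n lam (f U)"
proof -
  have lU: "length U = m" using ssyt_length[OF U] mu_len by simp
  have rl: "t < m \<Longrightarrow> length (U!t) = lam!(c+t)" for t using ssyt_len[OF U] lU mu_nth by simp
  have lenf: "length (f U) = length lam" using f_len[OF lU] .
  have fn: "t < length lam \<Longrightarrow> f U ! t = (if t < c then replicate (lam!t) (Suc t)
     else if t < b then map g (U!(t - c)) else replicate (lam!t) (n + 2 + t - length lam))" for t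
    using f_nth[OF lU] by simp
  have Uv: "t < m \<Longrightarrow> k < length (U!t) \<Longrightarrow> 1 \<le> U!t!k \<and> U!t!k \<le> MM + 1" for t k
    using ssyt_entry[OF U] lU by simp
  have rowlen: "length (f U ! t) = lam!t" if "t < length lam" for t
    using fn[OF that] rl[of "t - c"] cb that by auto
  show ?thesis unfolding is_ssyt_def
  proof (intro conjI allI impI ballI)
    show "length (f U) = length lam" by (rule lenf)
  next
    fix t assume "t < length lam" then show "length (f U ! t) = lam ! t" by (rule rowlen)
  next
    fix r x assume r: "r \<in> set (f U)" and x: "x \<in> set r"
    from r obtain t where t: "t < length lam" "r = f U ! t" by (auto simp: in_set_conv_nth lenf)
    have "1 \<le> x \<and> x \<le> n + 1"
    proof (cases "t < c")
      case True then show ?thesis using x t fn[of t] cb bl ln by auto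
    next
      case False
      show ?thesis
      proof (cases "t < b")
        case True
        then obtain k where k: "k < length (U!(t-c))" "x = U!(t-c)!k + c"
          using x t fn[of t] False by (auto simp: in_set_conv_nth g_def)
        have "t - c < m" using True False cb by simp
        then show ?thesis using Uv[of "t-c" k] k MMc2 by simp
      next
        case False
        then show ?thesis using x t fn[of t] \<open>\<not> t < c\<close> ln by auto
      qed
    qed
    then show "1 \<le> x" "x \<le> n + 1" by auto
  next
    fix r assume r: "r \<in> set (f U)"
    from r obtain t where t: "t < length lam" "r = f U ! t" by (auto simp: in_set_conv_nth lenf)
    have "sorted (U!(t-c))" if "t - c < m" using ssyt_row_sorted[OF U] lU that by simp
    then show "sorted r" using t fn[of t] cb
      by (auto simp: g_def sorted_map intro: sorted_wrt_mono_rel[rotated])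
  next
    fix t k assume tk: "Suc t < length (f U) \<and> k < length (f U ! Suc t)"
    have tl: "Suc t < length lam" using tk lenf by simp
    have kl: "k < lam!Suc t" using tk rowlen[OF tl] by simp
    have kl0: "k < lam!t" using part_mono[OF p, of t "Suc t"] tl kl by simp
    show "f U ! t ! k < f U ! Suc t ! k"
    proof (cases "Suc t < c")
      case True then show ?thesis using fn[of t] fn[of "Suc t"] tl kl kl0 by simp
    next
      case False
      note nc = False
      show ?thesis
      proof (cases "Suc t = c")
        case True
        have l0: "k < length (U!0)" using rl[of 0] cb kl True by simp
        have "1 \<le> U!0!k" using Uv[of 0 k] l0 cb by simp
        then show ?thesis using fn[of t] fn[of "Suc t"] tl kl kl0 True l0 cb by (simp add: g_def)
      next
        case False
        then have ct: "c \<le> t" using nc by simp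
        show ?thesis
        proof (cases "Suc t < b")
          case True
          have tm: "Suc (t - c) < length U" using True ct lU cb by simp
          have e: "Suc (t - c) = Suc t - c" using ct by simp
          have kl': "k < length (U ! Suc (t - c))" using rl[of "Suc (t - c)"] tm lU kl ct e by simp
          have "U!(t-c)!k < U!Suc (t-c)!k" using ssyt_col[OF U tm kl'] .
          moreover have "k < length (U!(t-c))" using rl[of "t-c"] tm lU kl0 ct by simp
          ultimately show ?thesis using fn[of t] fn[of "Suc t"] tl True ct e kl' by (simp add: g_def)
        next
          case False
          note nb = False
          show ?thesis
          proof (cases "Suc t = b")
            case True
            have tm: "t - c < m" using True ct cb by simp
            have kl': "k < length (U!(t-c))" using rl[OF tm] kl0 ct by simp
            have "U!(t-c)!k \<le> MM + 1" using Uv[OF tm kl'] by simp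
            then show ?thesis using fn[of t] fn[of "Suc t"] tl True ct kl kl' MMc cb ln
              by (simp add: g_def)
          next
            case False
            then show ?thesis using fn[of t] fn[of "Suc t"] tl nb ct kl kl0 ln by simp
          qed
        qed
      qed
    qed
  qed
qed

lemma f_inj: "f U = f V \<Longrightarrow> U = V"
proof -
  assume "f U = f V"
  then have "map (map g) U = map (map g) V" unfolding f_def by simp
  moreover have "inj (map g)" by (intro inj_mapI) (simp add: g_def inj_def)
  ultimately show "U = V" by (simp add: inj_map_eq_map)
qed

end

context emb
begin

lemma rw_map_g: "reading_word (map (map g) U) = map g (reading_word U)"
  unfolding reading_word_def by (simp add: map_concat rev_map)

lemma unword_f:
  assumes "length w' = length (reading_word U)"
  shows "unword (f U) (wb @ map g w' @ wt) = f (unword U w')"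
proof -
  have "unword (tp @ map (map g) U @ bt) (wb @ map g w' @ wt)
      = unword tp wt @ unword (map (map g) U) (map g w') @ unword bt wb"
    using assms unfolding wb_def wt_def by (intro unword_append3) (auto simp: rw_map_g)
  also have "\<dots> = tp @ map (map g) (unword U w') @ bt"
    using unword_word[of tp tp] unword_word[of bt bt] unword_map[of g U w'] unfolding wt_def wb_def by simp
  finally show ?thesis unfolding f_def .
qed

lemma Fop_f:
  assumes U: "is_ssyt MM mu U" and i1: "1 \<le> i" and iM: "i \<le> MM"
  shows "Fop (i + c) (f U) = map_option f (Fop i U)"
proof -
  let ?w = "reading_word U"
  have g_eq: "g = (\<lambda>x. x + c)" unfolding g_def ..
  have nb: "\<forall>x\<in>set wb. x \<noteq> i + c \<and> x \<noteq> Suc (i + c)" using wb_vals iM by fastforce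
  have nt: "\<forall>x\<in>set wt. x \<noteq> i + c \<and> x \<noteq> Suc (i + c)" using wt_vals i1 by fastforce
  have u: "uc (i + c) 0 0 (reading_word (f U)) = map (\<lambda>e. e + length wb) (uc i 0 0 ?w)"
  proof -
    have "uc (i + c) 0 0 (reading_word (f U))
        = uc (i + c) 0 (length wb) (map g ?w @ wt)"
      unfolding rw_f uc_append using uc_nob[OF nb] by simp
    also have "\<dots> = uc (i + c) 0 (length wb) (map g ?w)"
      unfolding uc_append using uc_nob[OF nt] by simp
    also have "\<dots> = uc i 0 (length wb) ?w" unfolding g_eq by (rule uc_map_add)
    also have "\<dots> = map (\<lambda>e. e + length wb) (uc i 0 0 ?w)" using uc_shift[of i 0 0 "length wb" ?w] by simp
    finally show ?thesis .
  qed
  show ?thesis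
  proof (cases "uc i 0 0 ?w = []")
    case True
    then show ?thesis unfolding Fop_unword Let_def u by simp
  next
    case False
    define q where "q = last (uc i 0 0 ?w)"
    have "q \<in> set (uc i 0 0 ?w)" unfolding q_def using False by simp
    then have ql: "q < length ?w" using uc_mem by fastforce
    have lst: "last (map (\<lambda>e. e + length wb) (uc i 0 0 ?w)) = q + length wb"
      unfolding q_def using False by (simp add: last_map)
    have upd: "(reading_word (f U))[q + length wb := Suc (i + c)] = wb @ map g (?w[q := Suc i]) @ wt"
      unfolding rw_f using ql by (simp add: list_update_append map_update g_def)
    show ?thesis unfolding Fop_unword Let_def u using False lst upd unword_f[of "?w[q := Suc i]" U]
      by (simp add: q_def)
  qed
qed

lemma Bstep_f:
  assumes "Bstep MM mu U V"
  shows "Bstep n lam (f U) (f V)"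
proof -
  obtain i where U: "is_ssyt MM mu U" and V: "is_ssyt MM mu V" and i: "1 \<le> i" "i \<le> MM"
    and F: "Fop i U = Some V"
    using assms unfolding Bstep_def Btab_def by blast
  have "Fop (i + c) (f U) = Some (f V)" using Fop_f[OF U i] F by simp
  moreover have "1 \<le> i + c" "i + c \<le> n" using i MMc2 by auto
  ultimately show ?thesis unfolding Bstep_def Btab_def using f_ssyt[OF U] f_ssyt[OF V] by blast
qed

lemma Ble_f: "Ble MM mu U V \<Longrightarrow> Ble n lam (f U) (f V)"
proof -
  assume a: "Ble MM mu U V"
  have "(Bstep n lam)\<^sup>*\<^sup>* (f U) (f V)"
    by (rule rtranclp_map[where h=f and r'="Bstep n lam", OF a[unfolded Ble_def] Bstep_f])
  then show ?thesis unfolding Ble_def .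
qed

lemma ssyt_map_length: "is_ssyt N \<nu> T \<Longrightarrow> map length T = \<nu>"
  unfolding is_ssyt_def by (intro nth_equalityI) auto

lemma rw_len_ssyt: "is_ssyt N \<nu> T \<Longrightarrow> length (reading_word T) = sum_list \<nu>"
  using ssyt_map_length rw_length by metis

lemma Bstep_f_rev:
  assumes W: "is_ssyt MM mu W" and W': "is_ssyt MM mu W'" and B: "Bstep n lam (f W) (f W')"
  shows "Bstep MM mu W W'"
proof -
  obtain k where F: "Fop k (f W) = Some (f W')" using B unfolding Bstep_def by blast
  obtain p where p: "p < length (reading_word (f W))" "reading_word (f W) ! p = k"
    "reading_word (f W') = (reading_word (f W))[p := Suc k]" using Fop_word[OF F] by blast
  let ?X = "map g (reading_word W)" and ?X' = "map g (reading_word W')"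
  have lX: "length ?X' = length ?X" using rw_len_ssyt[OF W] rw_len_ssyt[OF W'] by simp
  have eq: "wb @ ?X' @ wt = (wb @ ?X @ wt)[p := Suc k]" using p(3) unfolding rw_f .
  have pv: "(wb @ ?X @ wt) ! p = k" using p(2) unfolding rw_f .
  have pl: "p < length (wb @ ?X @ wt)" using p(1) unfolding rw_f .
  have nw: "\<not> p < length wb"
  proof
    assume a: "p < length wb"
    have "(wb @ ?X' @ wt) ! p = Suc k" using eq pl by simp
    moreover have "(wb @ ?X' @ wt) ! p = (wb @ ?X @ wt) ! p" using a by (simp add: nth_append)
    ultimately show False using pv by simp
  qed
  define q where "q = p - length wb"
  have nt: "q < length ?X"
  proof (rule ccontr)
    assume a: "\<not> q < length ?X"
    have "(wb @ ?X' @ wt) ! p = Suc k" using eq pl by simp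
    moreover have "(wb @ ?X' @ wt) ! p = (wb @ ?X @ wt) ! p"
      using a nw lX unfolding q_def by (simp add: nth_append)
    ultimately show False using pv by simp
  qed
  have xq: "?X ! q = k" using pv nw nt unfolding q_def by (simp add: nth_append)
  have xq': "?X' ! q = Suc k"
  proof -
    have "(wb @ ?X' @ wt) ! p = Suc k" using eq pl by simp
    then show ?thesis using nw nt lX unfolding q_def by (simp add: nth_append)
  qed
  have q1: "q < length (reading_word W)" using nt by simp
  have q2: "q < length (reading_word W')" using nt lX by simp
  have v1: "1 \<le> reading_word W ! q" using ssyt_vals[OF W, of "reading_word W ! q"] q1 by simp
  have v2: "reading_word W' ! q \<le> MM + 1" using ssyt_vals[OF W', of "reading_word W' ! q"] q2 by simp
  have k1: "k = reading_word W ! q + c" using xq q1 by (simp add: g_def)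
  have k2: "Suc k = reading_word W' ! q + c" using xq' q2 by (simp add: g_def)
  define i where "i = k - c"
  have i1: "1 \<le> i" and iM: "i \<le> MM" and ki: "k = i + c" using k1 k2 v1 v2 i_def by auto
  have "map_option f (Fop i W) = Some (f W')" using Fop_f[OF W i1 iM] F ki by simp
  then obtain W'' where "Fop i W = Some W''" "f W'' = f W'" by auto
  then have "Fop i W = Some W'" using f_inj by simp
  then show ?thesis unfolding Bstep_def Btab_def using W W' i1 iM by blast
qed

end

lemma map_nth_drop: "b \<le> length xs \<Longrightarrow> map (\<lambda>t. xs!t) [b..<length xs] = drop b xs"
  by (intro nth_equalityI) auto

lemma map_nth_take: "c \<le> length xs \<Longrightarrow> map (\<lambda>t. xs!t) [0..<c] = take c xs"
  by (intro nth_equalityI) auto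

lemma interval_lattice:
  assumes L: "is_lattice A le" and S: "S \<in> A" and T: "T \<in> A"
    and tr: "\<And>x y z. le x y \<Longrightarrow> le y z \<Longrightarrow> le x z"
  shows "is_lattice (interval A le S T) le"
  unfolding is_lattice_def
proof (intro ballI conjI)
  fix x y assume x: "x \<in> interval A le S T" and y: "y \<in> interval A le S T"
  have xA: "x \<in> A" "le S x" "le x T" and yA: "y \<in> A" "le S y" "le y T"
    using x y unfolding interval_def by auto
  obtain j where j: "j \<in> A" "le x j" "le y j" "\<forall>z\<in>A. le x z \<and> le y z \<longrightarrow> le j z"
    using L xA yA unfolding is_lattice_def by blast
  have "le j T" using j(4) T xA(3) yA(3) by blast
  moreover have "le S j" using tr[OF xA(2) j(2)] .
  ultimately have "j \<in> interval A le S T" using j(1) unfolding interval_def by simp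
  then show "\<exists>j\<in>interval A le S T. le x j \<and> le y j \<and> (\<forall>z\<in>interval A le S T. le x z \<and> le y z \<longrightarrow> le j z)"
    using j unfolding interval_def by blast
  obtain mm where mm: "mm \<in> A" "le mm x" "le mm y" "\<forall>z\<in>A. le z x \<and> le z y \<longrightarrow> le z mm"
    using L xA yA unfolding is_lattice_def by blast
  have "le S mm" using mm(4) S xA(2) yA(2) by blast
  moreover have "le mm T" using tr[OF mm(2) xA(3)] .
  ultimately have "mm \<in> interval A le S T" using mm(1) unfolding interval_def by simp
  then show "\<exists>mm\<in>interval A le S T. le mm x \<and> le mm y \<and> (\<forall>z\<in>interval A le S T. le z x \<and> le z y \<longrightarrow> le z mm)"
    using mm unfolding interval_def by blast
qed

lemma iso_lattice:
  assumes I: "poset_iso A leA C leC" and L: "is_lattice C leC"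
  shows "is_lattice A leA"
proof -
  obtain h where bij: "bij_betw h A C" and ord: "\<forall>x\<in>A. \<forall>y\<in>A. leA x y \<longleftrightarrow> leC (h x) (h y)"
    using I unfolding poset_iso_def by blast
  have img: "h ` A = C" using bij by (simp add: bij_betw_def)
  show ?thesis unfolding is_lattice_def
  proof (intro ballI conjI)
    fix x y assume x: "x \<in> A" and y: "y \<in> A"
    have hx: "h x \<in> C" and hy: "h y \<in> C" using x y img by auto
    obtain j where j: "j \<in> C" "leC (h x) j" "leC (h y) j" "\<forall>z\<in>C. leC (h x) z \<and> leC (h y) z \<longrightarrow> leC j z"
      using L hx hy unfolding is_lattice_def by blast
    obtain j0 where j0: "j0 \<in> A" "j = h j0" using j(1) img by auto
    show "\<exists>j\<in>A. leA x j \<and> leA y j \<and> (\<forall>z\<in>A. leA x z \<and> leA y z \<longrightarrow> leA j z)"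
      using j j0 ord x y by (metis image_eqI img)
    obtain mm where mm: "mm \<in> C" "leC mm (h x)" "leC mm (h y)" "\<forall>z\<in>C. leC z (h x) \<and> leC z (h y) \<longrightarrow> leC z mm"
      using L hx hy unfolding is_lattice_def by blast
    obtain m0 where m0: "m0 \<in> A" "mm = h m0" using mm(1) img by auto
    show "\<exists>mm\<in>A. leA mm x \<and> leA mm y \<and> (\<forall>z\<in>A. leA z x \<and> leA z y \<longrightarrow> leA z mm)"
      using mm m0 ord x y by (metis image_eqI img)
  qed
qed

context emb
begin

lemma interval_char:
  assumes Z: "is_ssyt n lam Z" and lo: "Ble n lam (f (umin mu)) Z"
    and hi: "Ble n lam Z (f (umax MM mu))"
  shows "\<exists>W. is_ssyt MM mu W \<and> Z = f W"
proof -
  have Umin: "is_ssyt MM mu (umin mu)" by (rule umin_ssyt[OF mu_part mu_l])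
  have Umax: "is_ssyt MM mu (umax MM mu)" by (rule umax_ssyt[OF mu_part mu_l])
  let ?wl = "reading_word (umin mu)" and ?wh = "reading_word (umax MM mu)"
  have L1: "list_all2 (\<le>) (wb @ map g ?wl @ wt) (reading_word Z)"
    using Ble_word[OF lo] unfolding rw_f .
  have L2: "list_all2 (\<le>) (reading_word Z) (wb @ map g ?wh @ wt)"
    using Ble_word[OF hi] unfolding rw_f .
  have lZ: "length Z = length lam" using ssyt_length[OF Z] .
  have mlZ: "map length Z = lam" using ssyt_map_length[OF Z] .
  define Zt where "Zt = take c Z"
  define Zm where "Zm = take m (drop c Z)"
  define Zb where "Zb = drop b Z"
  have Zeq: "Z = Zt @ Zm @ Zb"
    unfolding Zt_def Zm_def Zb_def using take_add[of c m Z] cb(2)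
    by (metis append.assoc append_take_drop_id)
  have rwZ: "reading_word Z = reading_word Zb @ reading_word Zm @ reading_word Zt"
    by (subst Zeq) (rule rw_append3)
  have mlb: "map length Zb = map length bt"
    unfolding Zb_def bt_def using mlZ bl by (simp add: drop_map[symmetric] comp_def map_nth_drop)
  have mlt: "map length Zt = map length tp"
    unfolding Zt_def tp_def using mlZ cb bl by (simp add: take_map[symmetric] comp_def map_nth_take)
  have mlm: "map length Zm = mu"
    unfolding Zm_def mu_def m_def using mlZ by (metis drop_map take_map drop_take)
  have lb: "length (reading_word Zb) = length wb" unfolding wb_def rw_length mlb ..
  have lt: "length (reading_word Zt) = length wt" unfolding wt_def rw_length mlt ..
  have lml: "length (reading_word Zm) = length (map g ?wl)"
    using rw_length[of Zm] mlm rw_len_ssyt[OF Umin] by simp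
  have lmh: "length (reading_word Zm) = length (map g ?wh)"
    using rw_length[of Zm] mlm rw_len_ssyt[OF Umax] by simp
  from L1 have A1: "list_all2 (\<le>) wb (reading_word Zb)" "list_all2 (\<le>) (map g ?wl) (reading_word Zm)"
    "list_all2 (\<le>) wt (reading_word Zt)"
    unfolding rwZ using lb lml by (auto simp: list_all2_append)
  from L2 have A2: "list_all2 (\<le>) (reading_word Zb) wb" "list_all2 (\<le>) (reading_word Zm) (map g ?wh)"
    "list_all2 (\<le>) (reading_word Zt) wt"
    unfolding rwZ using lb lmh by (auto simp: list_all2_append)
  have eb: "reading_word Zb = wb" using list_all2_antisym[OF _ A2(1) A1(1)] by simp
  have et: "reading_word Zt = wt" using list_all2_antisym[OF _ A2(3) A1(3)] by simp
  have Zbe: "Zb = bt"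
  proof -
    have "Zb = unword bt (reading_word Zb)" using unword_word[OF mlb] by simp
    also have "\<dots> = unword bt (reading_word bt)" using eb unfolding wb_def by simp
    also have "\<dots> = bt" by (rule unword_word) simp
    finally show ?thesis .
  qed
  have Zte: "Zt = tp"
  proof -
    have "Zt = unword tp (reading_word Zt)" using unword_word[OF mlt] by simp
    also have "\<dots> = unword tp (reading_word tp)" using et unfolding wt_def by simp
    also have "\<dots> = tp" by (rule unword_word) simp
    finally show ?thesis .
  qed
  have bnd: "c < x \<and> x \<le> MM + 1 + c" if xs: "x \<in> set (reading_word Zm)" for x
  proof -
    obtain q where q: "q < length (reading_word Zm)" "x = reading_word Zm ! q"
      using xs by (auto simp: in_set_conv_nth)
    have "map g ?wl ! q \<le> x" using list_all2_nthD2[OF A1(2) q(1)] q(2) by simp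
    moreover have "x \<le> map g ?wh ! q" using list_all2_nthD[OF A2(2) q(1)] q(2) by simp
    moreover have "1 \<le> ?wl ! q" using ssyt_vals[OF Umin, of "?wl ! q"] q lml by simp
    moreover have "?wh ! q \<le> MM + 1" using ssyt_vals[OF Umax, of "?wh ! q"] q lmh by simp
    ultimately show ?thesis using q lml lmh by (simp add: g_def)
  qed
  have bnd': "c < x \<and> x \<le> MM + 1 + c" if tx: "t < length Zm" "x \<in> set (Zm ! t)" for t x
  proof -
    have "Zm ! t \<in> set Zm" using tx(1) by simp
    then have "x \<in> set (reading_word Zm)" unfolding reading_word_def using tx(2) by auto
    then show ?thesis by (rule bnd)
  qed
  define W where "W = map (map (\<lambda>x. x - c)) Zm"
  have mW: "map (map g) W = Zm"
  proof -
    have "map (map g) W = map (map (\<lambda>x. x - c + c)) Zm" unfolding W_def g_def by (simp add: comp_def)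
    also have "\<dots> = Zm"
    proof (rule map_idI)
      fix r assume "r \<in> set Zm"
      then obtain t where t: "t < length Zm" "r = Zm!t" by (auto simp: in_set_conv_nth)
      show "map (\<lambda>x. x - c + c) r = r"
      proof (rule map_idI)
        fix x assume "x \<in> set r"
        then have "c < x" using bnd' t by blast
        then show "x - c + c = x" by simp
      qed
    qed
    finally show ?thesis .
  qed
  have fW: "f W = Z" unfolding f_def mW using Zeq Zbe Zte by simp
  have lZm: "length Zm = m" using mlm mu_len by (metis length_map)
  have ZmZ: "t < m \<Longrightarrow> Zm ! t = Z ! (c + t)" for t unfolding Zm_def using lZm Zm_def by simp
  have WS: "is_ssyt MM mu W"
    unfolding is_ssyt_def
  proof (intro conjI allI impI ballI)
    show "length W = length mu" unfolding W_def using lZm mu_len by simp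
  next
    fix t assume "t < length mu"
    then show "length (W ! t) = mu ! t" unfolding W_def using mlm lZm mu_len
      by (metis length_map nth_map)
  next
    fix r x assume r: "r \<in> set W" and x: "x \<in> set r"
    obtain t where t: "t < length Zm" "r = map (\<lambda>x. x - c) (Zm ! t)"
      using r unfolding W_def by (auto simp: in_set_conv_nth)
    obtain y where y: "y \<in> set (Zm ! t)" "x = y - c" using x t by auto
    show "1 \<le> x" "x \<le> MM + 1" using bnd'[OF t(1) y(1)] y(2) by auto
  next
    fix r assume r: "r \<in> set W"
    obtain t where t: "t < length Zm" "r = map (\<lambda>x. x - c) (Zm ! t)"
      using r unfolding W_def by (auto simp: in_set_conv_nth)
    have "sorted (Zm ! t)" using ssyt_row_sorted[OF Z, of "c + t"] ZmZ t lZm lZ cb bl by simp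
    then show "sorted r" unfolding t(2) sorted_map
      by (rule sorted_wrt_mono_rel[rotated]) (simp add: diff_le_mono)
  next
    fix t k assume tk: "Suc t < length W \<and> k < length (W ! Suc t)"
    have tm: "Suc t < m" using tk lZm unfolding W_def by simp
    have tZ: "Suc t < length Zm" using tk unfolding W_def by simp
    have kl: "k < length (Zm ! Suc t)" using tk tZ unfolding W_def by simp
    have ct: "Suc (c + t) < length Z" using tm cb bl lZ by simp
    have kl': "k < length (Z ! Suc (c + t))" using kl ZmZ[OF tm] by simp
    have "Z ! (c + t) ! k < Z ! Suc (c + t) ! k" using ssyt_col[OF Z ct kl'] .
    moreover have kl0: "k < length (Z!(c+t))" using ssyt_len_mono[OF p Z, of "c+t" "Suc (c+t)"] ct kl' by simp
    moreover have "c < Zm ! Suc t ! k" using bnd'[of "Suc t"] tm lZm kl by simp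
    ultimately show "W ! t ! k < W ! Suc t ! k"
      unfolding W_def using tm lZm ZmZ[OF tm] ZmZ[of t] kl kl0 by (simp add: nth_map)
  qed
  show ?thesis using WS fW by blast
qed

theorem main_emb:
  "\<exists>S\<in>Btab n lam. \<exists>T\<in>Btab n lam.
     poset_iso (Btab MM mu) (Ble MM mu) (interval (Btab n lam) (Ble n lam) S T) (Ble n lam)
   \<and> (\<not> is_lattice (Btab MM mu) (Ble MM mu) \<longrightarrow> \<not> is_lattice (Btab n lam) (Ble n lam))"
proof -
  have Umin: "is_ssyt MM mu (umin mu)" by (rule umin_ssyt[OF mu_part mu_l])
  have Umax: "is_ssyt MM mu (umax MM mu)" by (rule umax_ssyt[OF mu_part mu_l])
  define S where "S = f (umin mu)"
  define T where "T = f (umax MM mu)"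
  have SB: "S \<in> Btab n lam" unfolding S_def Btab_def using f_ssyt[OF Umin] by simp
  have TB: "T \<in> Btab n lam" unfolding T_def Btab_def using f_ssyt[OF Umax] by simp
  have tr: "\<And>x y z. Ble N \<nu> x y \<Longrightarrow> Ble N \<nu> y z \<Longrightarrow> Ble N \<nu> x z" for N \<nu>
    unfolding Ble_def by (meson rtranclp_trans)
  have lo: "Ble n lam S (f U)" if "is_ssyt MM mu U" for U
    unfolding S_def using Ble_f[OF Ble_min[OF mu_part mu_l that]] .
  have hi: "Ble n lam (f U) T" if "is_ssyt MM mu U" for U
    unfolding T_def using Ble_f[OF Ble_max[OF mu_part mu_l that]] .
  have img: "interval (Btab n lam) (Ble n lam) S T = f ` Btab MM mu"
  proof
    show "interval (Btab n lam) (Ble n lam) S T \<subseteq> f ` Btab MM mu"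
    proof
      fix Z assume "Z \<in> interval (Btab n lam) (Ble n lam) S T"
      then have "is_ssyt n lam Z" "Ble n lam S Z" "Ble n lam Z T"
        unfolding interval_def Btab_def by auto
      then obtain W where "is_ssyt MM mu W" "Z = f W"
        using interval_char unfolding S_def T_def by blast
      then show "Z \<in> f ` Btab MM mu" unfolding Btab_def by blast
    qed
  next
    show "f ` Btab MM mu \<subseteq> interval (Btab n lam) (Ble n lam) S T"
      unfolding interval_def Btab_def using f_ssyt lo hi by auto
  qed
  have backw: "\<exists>W. is_ssyt MM mu W \<and> Z = f W \<and> Ble MM mu U W"
    if U: "is_ssyt MM mu U" and V: "is_ssyt MM mu V" and UZ: "Ble n lam (f U) Z"
      and ZV: "Ble n lam Z (f V)" for U V Z
    using UZ[unfolded Ble_def] ZV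
  proof (induction rule: rtranclp_induct)
    case base then show ?case using U unfolding Ble_def by blast
  next
    case (step Y Z)
    have YV: "Ble n lam Y (f V)" using step(2) step.prems unfolding Ble_def
      by (meson converse_rtranclp_into_rtranclp)
    obtain W where W: "is_ssyt MM mu W" "Y = f W" "Ble MM mu U W" using step.IH[OF YV] by blast
    have ZB: "is_ssyt n lam Z" using step(2) unfolding Bstep_def Btab_def by blast
    have "Ble n lam S Z" using lo[OF U] step(1) step(2) unfolding Ble_def
      by (meson rtranclp.rtrancl_into_rtrancl rtranclp_trans)
    moreover have "Ble n lam Z T" using hi[OF V] step.prems tr by blast
    ultimately obtain W' where W': "is_ssyt MM mu W'" "Z = f W'"
      using interval_char[OF ZB] unfolding S_def T_def by blast
    have bs: "Bstep MM mu W W'" using Bstep_f_rev[OF W(1) W'(1)] step(2) W(2) W'(2) by simp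
    have "Ble MM mu U W'" using W(3) bs unfolding Ble_def by (rule rtranclp.rtrancl_into_rtrancl)
    then show ?case using W' by blast
  qed
  have ord: "\<forall>x\<in>Btab MM mu. \<forall>y\<in>Btab MM mu. Ble MM mu x y \<longleftrightarrow> Ble n lam (f x) (f y)"
  proof (intro ballI iffI)
    fix x y assume "Ble MM mu x y" then show "Ble n lam (f x) (f y)" by (rule Ble_f)
  next
    fix x y assume x: "x \<in> Btab MM mu" and y: "y \<in> Btab MM mu" and "Ble n lam (f x) (f y)"
    then obtain W where "Ble MM mu x W" "f y = f W"
      using backw[of x y "f y"] unfolding Btab_def Ble_def by auto
    then show "Ble MM mu x y" using f_inj by metis
  qed
  have iso: "poset_iso (Btab MM mu) (Ble MM mu) (interval (Btab n lam) (Ble n lam) S T) (Ble n lam)"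
    unfolding poset_iso_def
  proof (intro exI conjI)
    show "bij_betw f (Btab MM mu) (interval (Btab n lam) (Ble n lam) S T)"
      unfolding bij_betw_def img using f_inj by (auto intro: inj_onI)
    show "\<forall>x\<in>Btab MM mu. \<forall>y\<in>Btab MM mu. Ble MM mu x y \<longleftrightarrow> Ble n lam (f x) (f y)" by (rule ord)
  qed
  have lat: "\<not> is_lattice (Btab MM mu) (Ble MM mu) \<longrightarrow> \<not> is_lattice (Btab n lam) (Ble n lam)"
  proof (intro impI notI)
    assume nl: "\<not> is_lattice (Btab MM mu) (Ble MM mu)" and l: "is_lattice (Btab n lam) (Ble n lam)"
    have "is_lattice (interval (Btab n lam) (Ble n lam) S T) (Ble n lam)"
      using interval_lattice[OF l SB TB] tr by blast
    then show False using iso_lattice[OF iso] nl by blast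
  qed
  show ?thesis using SB TB iso lat by blast
qed

end

theorem lemma5p1:
  fixes lam :: "nat list" and a b n :: nat
  assumes "is_partition lam"
    and "1 \<le> a" and "a \<le> b" and "b \<le> length lam"
    and "length lam \<le> n"
  defines "mu \<equiv> drop (a - 1) (take b lam)"
    and "M \<equiv> n - length lam + (b - a + 1)"
  shows "(\<exists>S\<in>Btab n lam. \<exists>T\<in>Btab n lam.
            poset_iso (Btab M mu) (Ble M mu) (interval (Btab n lam) (Ble n lam) S T) (Ble n lam))
         \<and> (\<not> is_lattice (Btab M mu) (Ble M mu) \<longrightarrow> \<not> is_lattice (Btab n lam) (Ble n lam))"
proof -
  interpret E: emb lam a b n using assms(1-5) by unfold_locales
  have mu_eq: "mu = E.mu" unfolding mu_def E.mu_def E.c_def ..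
  have M_eq: "M = E.MM" unfolding M_def E.MM_def E.m_def E.c_def using assms(2,3) by simp
  show ?thesis using E.main_emb unfolding mu_eq M_eq by blast
qed

end
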